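(* With $\mathcal{F}$ the weaved flag of type $(m_1,\dots,m_2-m_1,m_2,\dots,m_k,\dots,n-m_k)$, let $\beta\in\mathbb{F}_{q^n}^\ast\setminus\mathbb{F}_{q^{m_1}}^\ast$ satisfy $\langle\beta\rangle\cap\mathbb{F}_{q^{m_1}}^\ast=\langle\beta\rangle\cap\mathbb{F}_{q^{m_k}}^\ast$. If $L_{k+1}=n/m_k\le3$, then $\mathrm{Orb}_\beta(\mathcal{F})$ is an optimum distance flag code.
   Context: $q$ prime power; $m_1<\dots<m_k<m_{k+1}=n$ with $m_i\mid m_{i+1}$; $L_i=m_i/m_{i-1}$ for $2\le i\le k+1$; $\alpha$ primitive in $\mathbb{F}_{q^n}$; $\alpha_i=\alpha^{(q^n-1)/(q^{m_i}-1)}$; $\mathcal{F}^i_j=\bigoplus_{t=0}^{j-1}\mathbb{F}_{q^{m_i}}\alpha_{i+1}^t$ ($\mathbb{F}_q$-subspaces of $\mathbb{F}_{q^n}$) for $1\le i\le k$, $1\le j\le L_{i+1}-1$, and $\mathcal{F}=(\mathcal{F}^1_1,\dots,\mathcal{F}^1_{L_2-1},\dots,\mathcal{F}^k_1,\dots,\mathcal{F}^k_{L_{k+1}-1})$. $d_S(\mathcal{U},\mathcal{V})=\dim(\mathcal{U}+\mathcal{V})-\dim(\mathcal{U}\cap\mathcal{V})$; $d_f$ is the sum of $d_S$ over positions; $\mathrm{Orb}_\beta(\mathcal{F})=\{\mathcal{F}\beta^j:j\ge0\}$ with $\mathcal{F}\beta^j$ obtained by multiplying each subspace by $\beta^j$.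 A flag code of type $(t_1,\dots,t_r)$ on $\mathbb{F}_{q^n}$ is an optimum distance flag code if its minimum distance (minimum $d_f$ between distinct codewords) equals $2(\sum_{t_i\le\lfloor n/2\rfloor}t_i+\sum_{t_i>\lfloor n/2\rfloor}(n-t_i))$. *)

theory Defs
  imports "HOL-Computational_Algebra.Primes"
begin

text \<open>Ambient field: a finite field type 'a with card UNIV = q^n.
  The subfield F_{q^m} (for m dividing n) is the set of roots of x^(q^m) - x.\<close>

definition subfield :: "nat \<Rightarrow> nat \<Rightarrow> 'a::{finite,field} set" where
  "subfield q m = {x. x ^ (q ^ m) = x}"

definition Fq_span :: "nat \<Rightarrow> 'a::{finite,field} set \<Rightarrow> 'a set" where
  "Fq_span q S = {(\<Sum>v\<in>T. c v * v) | T c. T \<subseteq> S \<and> finite T \<and> (\<forall>v\<in>T. c v \<in> subfield q 1)}"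

definition Fq_subspace :: "nat \<Rightarrow> 'a::{finite,field} set \<Rightarrow> bool" where
  "Fq_subspace q V \<longleftrightarrow> 0 \<in> V \<and> (\<forall>x\<in>V. \<forall>y\<in>V. x + y \<in> V)
     \<and> (\<forall>c\<in>subfield q 1. \<forall>x\<in>V. c * x \<in> V)"

definition Fq_dim :: "nat \<Rightarrow> 'a::{finite,field} set \<Rightarrow> nat" where
  "Fq_dim q V = (LEAST d. \<exists>S. S \<subseteq> V \<and> finite S \<and> card S = d \<and> Fq_span q S = V)"

definition subspace_sum :: "'a::{finite,field} set \<Rightarrow> 'a set \<Rightarrow> 'a set" where
  "subspace_sum U V = {u + v | u v. u \<in> U \<and> v \<in> V}"

definition subspace_dist :: "nat \<Rightarrow> 'a::{finite,field} set \<Rightarrow> 'a set \<Rightarrow> nat" where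
  "subspace_dist q U V = Fq_dim q (subspace_sum U V) - Fq_dim q (U \<inter> V)"

definition flag_dist :: "nat \<Rightarrow> 'a::{finite,field} set list \<Rightarrow> 'a set list \<Rightarrow> nat" where
  "flag_dist q F G = (\<Sum>i<length F. subspace_dist q (F ! i) (G ! i))"

definition is_flag_of_type :: "nat \<Rightarrow> nat list \<Rightarrow> 'a::{finite,field} set list \<Rightarrow> bool" where
  "is_flag_of_type q ts F \<longleftrightarrow> length F = length ts
     \<and> (\<forall>i<length F. Fq_subspace q (F ! i) \<and> Fq_dim q (F ! i) = ts ! i)
     \<and> (\<forall>i. Suc i < length F \<longrightarrow> F ! i \<subset> F ! Suc i)"

definition min_flag_dist :: "nat \<Rightarrow> 'a::{finite,field} set list set \<Rightarrow> nat" where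
  "min_flag_dist q C = Min {flag_dist q F G | F G. F \<in> C \<and> G \<in> C \<and> F \<noteq> G}"

definition optimum_distance_flag_code ::
  "nat \<Rightarrow> nat \<Rightarrow> nat list \<Rightarrow> 'a::{finite,field} set list set \<Rightarrow> bool" where
  "optimum_distance_flag_code q n ts C \<longleftrightarrow>
     (\<forall>F\<in>C. is_flag_of_type q ts F) \<and>
     min_flag_dist q C =
       2 * ((\<Sum>t\<leftarrow>ts. if t \<le> n div 2 then t else 0)
          + (\<Sum>t\<leftarrow>ts. if t > n div 2 then n - t else 0))"

definition flag_orbit :: "'a::{finite,field} \<Rightarrow> 'a set list \<Rightarrow> 'a set list set" where
  "flag_orbit \<beta> F = {map (\<lambda>U. (\<lambda>x. x * \<beta> ^ j) ` U) F | j::nat. True}"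

definition alpha_i :: "nat \<Rightarrow> nat \<Rightarrow> 'a::{finite,field} \<Rightarrow> nat \<Rightarrow> 'a" where
  "alpha_i q n \<alpha> mi = \<alpha> ^ ((q ^ n - 1) div (q ^ mi - 1))"

definition weave_sub :: "nat \<Rightarrow> nat \<Rightarrow> 'a::{finite,field} \<Rightarrow> (nat \<Rightarrow> nat) \<Rightarrow> nat \<Rightarrow> nat \<Rightarrow> 'a set" where
  "weave_sub q n \<alpha> m i j =
     {(\<Sum>t<j. c t * alpha_i q n \<alpha> (m (Suc i)) ^ t) | c. \<forall>t<j. c t \<in> subfield q (m i)}"

definition weaved_flag :: "nat \<Rightarrow> nat \<Rightarrow> 'a::{finite,field} \<Rightarrow> (nat \<Rightarrow> nat) \<Rightarrow> nat \<Rightarrow> 'a set list" where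
  "weaved_flag q n \<alpha> m k =
     concat (map (\<lambda>i. map (\<lambda>j. weave_sub q n \<alpha> m i j) [1..<m (Suc i) div m i]) [1..<Suc k])"

definition weaved_type :: "(nat \<Rightarrow> nat) \<Rightarrow> nat \<Rightarrow> nat list" where
  "weaved_type m k = concat (map (\<lambda>i. map (\<lambda>j. j * m i) [1..<m (Suc i) div m i]) [1..<Suc k])"

end

theory Submission
  imports Defs "HOL-Library.FuncSet"
begin

definition sf :: "'a::{finite,field} set \<Rightarrow> bool" where
  "sf R \<longleftrightarrow> 0 \<in> R \<and> 1 \<in> R \<and> (\<forall>x\<in>R. \<forall>y\<in>R. x + y \<in> R \<and> x * y \<in> R)
     \<and> (\<forall>x\<in>R. - x \<in> R) \<and> (\<forall>x\<in>R. x \<noteq> 0 \<longrightarrow> inverse x \<in> R)"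

definition ssp :: "'a::{finite,field} set \<Rightarrow> 'a set \<Rightarrow> bool" where
  "ssp R V \<longleftrightarrow> 0 \<in> V \<and> (\<forall>x\<in>V. \<forall>y\<in>V. x + y \<in> V) \<and> (\<forall>c\<in>R. \<forall>x\<in>V. c * x \<in> V)"

definition spn :: "'a::{finite,field} set \<Rightarrow> 'a set \<Rightarrow> 'a set" where
  "spn R S = {(\<Sum>v\<in>S. c v * v) | c. \<forall>v\<in>S. c v \<in> R}"

lemma spnI: "\<forall>v\<in>S. c v \<in> R \<Longrightarrow> x = (\<Sum>v\<in>S. c v * v) \<Longrightarrow> x \<in> spn R S"
  unfolding spn_def by blast

lemma ssp_sum: assumes "ssp R V" "finite T" "\<forall>t\<in>T. f t \<in> V" shows "sum f T \<in> V"
  using assms(2,3) by (induction T rule: finite_induct) (use assms(1) in \<open>auto simp: ssp_def\<close>)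

lemma ssp_neg: "sf R \<Longrightarrow> ssp R V \<Longrightarrow> x \<in> V \<Longrightarrow> - x \<in> V"
  unfolding sf_def ssp_def by (metis mult_minus1)

lemma ssp_diff: "sf R \<Longrightarrow> ssp R V \<Longrightarrow> x \<in> V \<Longrightarrow> y \<in> V \<Longrightarrow> x - y \<in> V"
  using ssp_neg[of R V y] unfolding ssp_def by (metis diff_conv_add_uminus)

lemma ssp_mono: "ssp R V \<Longrightarrow> R' \<subseteq> R \<Longrightarrow> ssp R' V"
  unfolding ssp_def by blast

lemma spn_ssp: assumes "sf R" shows "ssp R (spn R S)"
proof -
  have "0 \<in> spn R S" unfolding spn_def
    by (rule CollectI, rule exI[of _ "\<lambda>_. 0"]) (use assms in \<open>auto simp: sf_def\<close>)
  moreover have "x + y \<in> spn R S" if hx: "x \<in> spn R S" and hy: "y \<in> spn R S" for x y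
  proof -
    obtain c where c: "x = (\<Sum>v\<in>S. c v * v)" "\<forall>v\<in>S. c v \<in> R"
      using hx unfolding spn_def by blast
    obtain d where d: "y = (\<Sum>v\<in>S. d v * v)" "\<forall>v\<in>S. d v \<in> R"
      using hy unfolding spn_def by blast
    have "x + y = (\<Sum>v\<in>S. (c v + d v) * v)" by (simp add: c d sum.distrib distrib_right)
    moreover have "\<forall>v\<in>S. c v + d v \<in> R" using c d assms by (auto simp: sf_def)
    ultimately show ?thesis by (intro spnI[of S "\<lambda>v. c v + d v"]) auto
  qed
  moreover have "r * x \<in> spn R S" if hr: "r \<in> R" and hx: "x \<in> spn R S" for r x
  proof -
    obtain c where c: "x = (\<Sum>v\<in>S. c v * v)" "\<forall>v\<in>S. c v \<in> R"
      using hx unfolding spn_def by blast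
    have "r * x = (\<Sum>v\<in>S. (r * c v) * v)" by (simp add: c sum_distrib_left mult.assoc)
    moreover have "\<forall>v\<in>S. r * c v \<in> R" using c hr assms by (auto simp: sf_def)
    ultimately show ?thesis by (intro spnI[of S "\<lambda>v. r * c v"]) auto
  qed
  ultimately show ?thesis unfolding ssp_def by blast
qed

lemma spn_mult: assumes "ssp R V" "finite S" "\<forall>v\<in>S. w * v \<in> V" "x \<in> spn R S"
  shows "w * x \<in> V"
proof -
  obtain c where c: "x = (\<Sum>v\<in>S. c v * v)" "\<forall>v\<in>S. c v \<in> R"
    using assms(4) unfolding spn_def by blast
  have "w * x = (\<Sum>v\<in>S. c v * (w * v))" by (simp add: c sum_distrib_left mult_ac)
  also have "\<dots> \<in> V" apply (rule ssp_sum[OF assms(1,2)]) using assms(1,3) c(2) by (auto simp: ssp_def)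
  finally show ?thesis .
qed

lemma spn_sub: "ssp R V \<Longrightarrow> finite S \<Longrightarrow> S \<subseteq> V \<Longrightarrow> spn R S \<subseteq> V"
  using spn_mult[of R V S 1] by auto

lemma spn_gen: assumes "sf R" "finite S" "v \<in> S" shows "v \<in> spn R S"
proof -
  have "(\<Sum>u\<in>S. (if u = v then 1 else 0) * u) = (\<Sum>u\<in>S. if u = v then u else 0)"
    by (rule sum.cong) auto
  also have "\<dots> = v" using assms(2,3) by (simp add: sum.delta)
  finally have "(\<Sum>u\<in>S. (if u = v then 1 else 0) * u) = v" .
  moreover have "\<forall>u\<in>S. (if u = v then 1 else 0) \<in> R" using assms(1) by (auto simp: sf_def)
  ultimately show ?thesis unfolding spn_def
    by (intro CollectI exI[of _ "\<lambda>u. if u = v then 1 else 0"]) auto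
qed

lemma spn_empty: "spn R {} = {0}" unfolding spn_def by auto

lemma spn_card_le: assumes "finite S" shows "card (spn R S) \<le> card R ^ card S"
proof -
  have "spn R S \<subseteq> (\<lambda>c. \<Sum>v\<in>S. c v * v) ` (PiE S (\<lambda>_. R))"
  proof
    fix x assume "x \<in> spn R S"
    then obtain c where c: "x = (\<Sum>v\<in>S. c v * v)" "\<forall>v\<in>S. c v \<in> R" unfolding spn_def by blast
    have "x = (\<Sum>v\<in>S. restrict c S v * v)" unfolding c(1) by (rule sum.cong) (auto simp: restrict_apply')
    moreover have "restrict c S \<in> PiE S (\<lambda>_. R)" using c by auto
    ultimately show "x \<in> (\<lambda>c. \<Sum>v\<in>S. c v * v) ` (PiE S (\<lambda>_. R))" by blast
  qed
  hence "card (spn R S) \<le> card ((\<lambda>c. \<Sum>v\<in>S. c v * v) ` (PiE S (\<lambda>_. R)))"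
    by (intro card_mono) (auto intro!: finite_imageI finite_PiE assms)
  also have "\<dots> \<le> card (PiE S (\<lambda>_. R))" by (rule card_image_le) (auto intro!: finite_PiE assms)
  also have "\<dots> = card R ^ card S" using assms by (simp add: card_PiE prod_constant)
  finally show ?thesis .
qed

lemma sf_card: "sf R \<Longrightarrow> 2 \<le> card (R::'a::{finite,field} set)"
proof -
  assume "sf R"
  hence "{0,1} \<subseteq> R" by (auto simp: sf_def)
  hence "card {0::'a,1} \<le> card R" by (intro card_mono) auto
  thus ?thesis by simp
qed

lemma basis_ext:
  assumes R: "sf R" and V: "ssp R V"
  shows "S \<subseteq> V \<Longrightarrow> finite S \<Longrightarrow> card (spn R S) = card R ^ card S \<Longrightarrow>
     \<exists>S'. S' \<subseteq> V \<and> finite S' \<and> spn R S' = V \<and> card V = card R ^ card S'"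
proof (induction "card V - card (spn R S)" arbitrary: S rule: less_induct)
  case less
  have sub: "spn R S \<subseteq> V" using spn_sub[OF V less(3,2)] .
  show ?case
  proof (cases "spn R S = V")
    case True thus ?thesis using less by auto
  next
    case False
    then obtain v where v: "v \<in> V" "v \<notin> spn R S" using sub by blast
    have vS: "v \<notin> S" using v spn_gen[OF R less(3)] by blast
    define S' where "S' = insert v S"
    have fS': "finite S'" "S' \<subseteq> V" using less v by (auto simp: S'_def)
    have sp': "ssp R (spn R S')" by (rule spn_ssp[OF R])
    have SS': "spn R S \<subseteq> spn R S'"
      by (rule spn_sub[OF sp' less(3)]) (use spn_gen[OF R fS'(1)] in \<open>auto simp: S'_def\<close>)
    have vin: "v \<in> spn R S'" by (rule spn_gen[OF R fS'(1)]) (simp add: S'_def)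
    have inj: "inj_on (\<lambda>(w, c). w + c * v) (spn R S \<times> R)"
    proof (rule inj_onI, clarsimp)
      fix w c w' c' assume h: "w \<in> spn R S" "c \<in> R" "w' \<in> spn R S" "c' \<in> R" "w + c * v = w' + c' * v"
      show "w = w' \<and> c = c'"
      proof (cases "c = c'")
        case True thus ?thesis using h by simp
      next
        case False
        have "(c - c') * v = w' - w" using h(5) by (simp add: algebra_simps)
        hence "v = inverse (c - c') * (w' - w)" using False by (simp add: field_simps)
        moreover have "inverse (c - c') \<in> R" using R h False
          unfolding sf_def by (metis diff_conv_add_uminus eq_iff_diff_eq_0)
        moreover have "w' - w \<in> spn R S" using ssp_diff[OF R spn_ssp[OF R]] h by blast
        ultimately have "v \<in> spn R S" using spn_ssp[OF R, of S] unfolding ssp_def by metis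
        thus ?thesis using v by blast
      qed
    qed
    have img: "(\<lambda>(w, c). w + c * v) ` (spn R S \<times> R) \<subseteq> spn R S'"
    proof clarify
      fix w c assume "w \<in> spn R S" "c \<in> R"
      hence "w \<in> spn R S'" "c * v \<in> spn R S'" using SS' vin sp' unfolding ssp_def by blast+
      thus "w + c * v \<in> spn R S'" using sp' unfolding ssp_def by blast
    qed
    have "card (spn R S) * card R \<le> card (spn R S')"
      using card_mono[OF finite img] card_image[OF inj] by (simp add: card_cartesian_product)
    hence ge: "card R ^ card S' \<le> card (spn R S')"
      using less(4) vS less(3) by (simp add: S'_def mult.commute)
    have eq: "card (spn R S') = card R ^ card S'"
      using ge spn_card_le[OF fS'(1), of R] by simp
    have "card (spn R S) < card (spn R S')"
      using less(4) eq vS less(3) sf_card[OF R] by (simp add: S'_def)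
    moreover have "card (spn R S') \<le> card V"
      using spn_sub[OF V fS'(1,2)] by (intro card_mono) auto
    ultimately have "card V - card (spn R S') < card V - card (spn R S)" by linarith
    thus ?thesis using less(1)[OF _ fS'(2,1) eq] by blast
  qed
qed

lemma basis_exists:
  assumes "sf R" "ssp R V"
  shows "\<exists>S. S \<subseteq> V \<and> finite S \<and> spn R S = V \<and> card V = card R ^ card S"
  using basis_ext[OF assms, of "{}"] by (simp add: spn_empty)

lemma card_ssp: "sf R \<Longrightarrow> ssp R V \<Longrightarrow> \<exists>d. card V = card R ^ d"
  using basis_exists by blast


lemma dvd_pow_minus_one: "1 \<le> (x::nat) \<Longrightarrow> (x - 1) dvd (x ^ t - 1)"
proof (induction t)
  case 0 thus ?case by simp
next
  case (Suc t)
  have "1 \<le> x ^ t" using Suc.prems by simp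
  hence "x ^ Suc t - 1 = x * (x ^ t - 1) + (x - 1)" using Suc.prems
    by (simp add: algebra_simps diff_mult_distrib2)
  moreover have "x - 1 dvd x * (x ^ t - 1) + (x - 1)"
    using Suc.IH Suc.prems by (intro dvd_add dvd_mult) auto
  ultimately show ?case by simp
qed

lemma pow_card_minus_one:
  fixes x :: "'a::{finite,field}"
  assumes "x \<noteq> 0" shows "x ^ (card (UNIV :: 'a set) - 1) = 1"
proof -
  have "(\<Prod>y\<in>UNIV-{0}. x * y) = x ^ (card (UNIV :: 'a set) - 1) * \<Prod>(UNIV-{0})"
    by (simp add: prod.distrib card_Diff_singleton)
  moreover have "(\<Prod>y\<in>UNIV-{0}. x * y) = (\<Prod>y\<in>UNIV-{0}. y)"
    by (rule prod.reindex_bij_witness[of _ "\<lambda>y. y / x" "\<lambda>y. x * y"]) (use assms in auto)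
  moreover have "\<Prod>(UNIV-{0::'a}) \<noteq> 0" by (simp add: prod_zero_iff)
  ultimately show ?thesis by (metis mult_cancel_right2)
qed

lemma of_nat_card_UNIV: "of_nat (card (UNIV :: 'a::{finite,field} set)) = (0::'a)"
proof -
  have "(\<Sum>x\<in>(UNIV::'a set). x + 1) = (\<Sum>x\<in>UNIV. x)"
    by (rule sum.reindex_bij_witness[of _ "\<lambda>y. y - 1" "\<lambda>y. y + 1"]) auto
  thus ?thesis by (simp add: sum.distrib)
qed

locale ffset =
  fixes q n :: nat and \<alpha> :: "'a::{finite,field}"
  assumes q_pp: "\<exists>p r. prime p \<and> 0 < r \<and> q = p ^ r"
    and card: "card (UNIV :: 'a set) = q ^ n"
    and prim: "\<forall>x::'a. x \<noteq> 0 \<longrightarrow> (\<exists>j::nat. x = \<alpha> ^ j)"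
    and n2: "2 \<le> n"
begin

lemma q2: "2 \<le> q"
proof -
  obtain p r where pr: "prime p" "0 < r" "q = p ^ r" using q_pp by blast
  have p2: "2 \<le> p" using pr(1) prime_ge_2_nat by blast
  have "p ^ 1 \<le> p ^ r" using pr(2) p2 by (intro power_increasing) auto
  thus ?thesis using p2 pr(3) by simp
qed

lemma qn4: "4 \<le> q ^ n"
proof -
  have "q ^ 2 \<le> q ^ n" using q2 n2 by (intro power_increasing) auto
  moreover have "2 ^ 2 \<le> q ^ 2" using q2 by (intro power_mono) auto
  ultimately show ?thesis by simp
qed

lemma pow_N0: "x \<noteq> 0 \<Longrightarrow> x ^ (q ^ n - 1) = (1::'a)"
  using pow_card_minus_one[of x] card by simp

lemma char_p: obtains p r where "prime p" "0 < r" "q = p ^ r" "CHAR('a) = p"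
proof -
  obtain p r where pr: "prime p" "0 < r" "q = p ^ r" using q_pp by blast
  have cp: "prime CHAR('a)"
    using prime_CHAR_semidom finite_imp_CHAR_pos[where 'a='a] by auto
  have "of_nat (q ^ n) = (0::'a)" using of_nat_card_UNIV[where 'a='a] card by simp
  hence "CHAR('a) dvd q ^ n" by (simp only: of_nat_eq_0_iff_char_dvd)
  hence "CHAR('a) dvd p ^ (r * n)" using pr by (simp add: power_mult)
  hence "CHAR('a) dvd p" using prime_dvd_power[OF cp] by blast
  hence "CHAR('a) = p" using cp pr(1) by (simp add: primes_dvd_imp_eq)
  thus ?thesis using that pr by blast
qed

lemma neg_pow_char: "prime (CHAR('a)) \<Longrightarrow> (- x :: 'a) ^ (CHAR('a) ^ e) = - (x ^ (CHAR('a) ^ e))"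
proof (induction e)
  case 0 thus ?case by simp
next
  case (Suc e)
  have "(- x) ^ (CHAR('a) ^ Suc e) = ((- x) ^ (CHAR('a) ^ e)) ^ CHAR('a)"
    by (simp add: power_mult[symmetric] mult.commute)
  also have "\<dots> = - ((x ^ (CHAR('a) ^ e)) ^ CHAR('a))"
    using Suc by (simp add: minus_power_prime_CHAR)
  also have "\<dots> = - (x ^ (CHAR('a) ^ Suc e))"
    by (simp add: power_mult[symmetric] mult.commute)
  finally show ?case .
qed

lemma frob_add: "(x + y :: 'a) ^ (q ^ m) = x ^ (q ^ m) + y ^ (q ^ m)"
proof -
  obtain p r where pr: "prime p" "0 < r" "q = p ^ r" "CHAR('a) = p" by (rule char_p)
  show ?thesis using pr by (intro freshmans_dream'[where n = "r * m"]) (auto simp: power_mult)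
qed

lemma frob_neg: "(- x :: 'a) ^ (q ^ m) = - (x ^ (q ^ m))"
proof -
  obtain p r where pr: "prime p" "0 < r" "q = p ^ r" "CHAR('a) = p" by (rule char_p)
  have "q ^ m = CHAR('a) ^ (r * m)" using pr by (simp add: power_mult)
  thus ?thesis using neg_pow_char[of x "r * m"] pr by simp
qed

lemma sf_subfield: "sf (subfield q m :: 'a set)"
proof -
  have qm: "0 < q ^ m" using q2 by simp
  have "(0::'a) ^ (q ^ m) = 0" using qm by simp
  moreover have "\<And>x y::'a. x ^ (q ^ m) = x \<Longrightarrow> y ^ (q ^ m) = y \<Longrightarrow> (x + y) ^ (q ^ m) = x + y"
    by (simp add: frob_add)
  moreover have "\<And>x y::'a. x ^ (q ^ m) = x \<Longrightarrow> y ^ (q ^ m) = y \<Longrightarrow> (x * y) ^ (q ^ m) = x * y"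
    by (simp add: power_mult_distrib)
  moreover have "\<And>x::'a. x ^ (q ^ m) = x \<Longrightarrow> (- x) ^ (q ^ m) = - x"
    by (simp add: frob_neg)
  moreover have "\<And>x::'a. x ^ (q ^ m) = x \<Longrightarrow> (inverse x) ^ (q ^ m) = inverse x"
    by (simp add: power_inverse)
  ultimately show ?thesis unfolding sf_def subfield_def by auto
qed

lemma subfield_mono: assumes "m dvd m'" shows "subfield q m \<subseteq> (subfield q m' :: 'a set)"
proof
  fix x :: 'a assume x: "x \<in> subfield q m"
  obtain t where t: "m' = m * t" using assms by blast
  have "x ^ (q ^ (m * t)) = x"
  proof (induction t)
    case 0 thus ?case by simp
  next
    case (Suc t)
    have "x ^ (q ^ (m * Suc t)) = (x ^ (q ^ (m * t))) ^ (q ^ m)"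
      by (simp add: power_mult[symmetric] power_add mult.commute)
    thus ?case using Suc x by (simp add: subfield_def)
  qed
  thus "x \<in> subfield q m'" using t by (simp add: subfield_def)
qed

lemma subfield_n: "subfield q n = (UNIV :: 'a set)"
proof -
  have "x ^ (q ^ n) = x" for x :: 'a
  proof (cases "x = 0")
    case True thus ?thesis using q2 by simp
  next
    case False
    have "q ^ n = Suc (q ^ n - 1)" using qn4 by simp
    hence "x ^ (q ^ n) = x * x ^ (q ^ n - 1)" by (metis power_Suc)
    thus ?thesis using pow_N0[OF False] by simp
  qed
  thus ?thesis by (auto simp: subfield_def)
qed

lemma alpha_nz: "\<alpha> \<noteq> 0"
proof
  assume a0: "\<alpha> = 0"
  have "UNIV - {0} \<subseteq> {1::'a}"
  proof
    fix x :: 'a assume "x \<in> UNIV - {0}"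
    then obtain j where "x = \<alpha> ^ j" "x \<noteq> 0" using prim by blast
    thus "x \<in> {1}" using a0 by (cases j) auto
  qed
  hence "card (UNIV - {0::'a}) \<le> card {1::'a}" by (intro card_mono) auto
  hence "card (UNIV - {0::'a}) \<le> 1" by simp
  thus False using card qn4 by (simp add: card_Diff_singleton)
qed

lemma alpha_one_iff: "\<alpha> ^ s = 1 \<longleftrightarrow> (q ^ n - 1) dvd s"
proof
  assume "(q ^ n - 1) dvd s"
  then obtain u where "s = (q ^ n - 1) * u" by blast
  thus "\<alpha> ^ s = 1" using pow_N0[OF alpha_nz] by (simp add: power_mult)
next
  assume as: "\<alpha> ^ s = 1"
  define N0 where "N0 = q ^ n - 1"
  have N0pos: "0 < N0" using qn4 by (simp add: N0_def)
  have ex: "\<exists>d. 0 < d \<and> \<alpha> ^ d = 1" using pow_N0[OF alpha_nz] N0pos N0_def by blast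
  define d where "d = (LEAST d. 0 < d \<and> \<alpha> ^ d = 1)"
  have d0: "0 < d \<and> \<alpha> ^ d = 1" unfolding d_def by (rule LeastI_ex[OF ex])
  have d: "0 < d" "\<alpha> ^ d = 1" using d0 by auto
  have dmin: "d \<le> e" if "0 < e" "\<alpha> ^ e = 1" for e unfolding d_def by (rule Least_le) (use that in auto)
  have pmod: "\<alpha> ^ j = \<alpha> ^ (j mod d)" for j
  proof -
    have "\<alpha> ^ j = \<alpha> ^ (d * (j div d) + j mod d)" by simp
    also have "\<dots> = \<alpha> ^ (j mod d)" by (simp only: power_add power_mult d(2)) simp
    finally show ?thesis .
  qed
  have "UNIV - {0} \<subseteq> (\<lambda>j. \<alpha> ^ j) ` {..<d}"
  proof
    fix x :: 'a assume "x \<in> UNIV - {0}"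
    then obtain j where "x = \<alpha> ^ j" using prim by blast
    moreover have "j mod d < d" using d(1) by simp
    ultimately show "x \<in> (\<lambda>j. \<alpha> ^ j) ` {..<d}" using pmod[of j] by (intro image_eqI[of _ _ "j mod d"]) auto
  qed
  hence "card (UNIV - {0::'a}) \<le> card ((\<lambda>j. \<alpha> ^ j) ` {..<d})" by (intro card_mono) auto
  also have "\<dots> \<le> d" using card_image_le[of "{..<d}"] by simp
  finally have "N0 \<le> d" using card by (simp add: card_Diff_singleton N0_def)
  moreover have "d \<le> N0" using dmin[OF N0pos] pow_N0[OF alpha_nz] N0_def by simp
  ultimately have dN: "d = N0" by simp
  have "\<alpha> ^ (s mod d) = 1" using as pmod[of s] by simp
  moreover have "s mod d < d" using d(1) by simp
  ultimately have "s mod d = 0" using dmin[of "s mod d"] by (cases "s mod d = 0") auto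
  thus "(q ^ n - 1) dvd s" using dN N0_def by auto
qed

lemma alpha_eq_iff: "\<alpha> ^ a = \<alpha> ^ b \<longleftrightarrow> a mod (q ^ n - 1) = b mod (q ^ n - 1)"
proof -
  have gen: "\<alpha> ^ a = \<alpha> ^ b \<longleftrightarrow> a mod (q ^ n - 1) = b mod (q ^ n - 1)" if "a \<le> b" for a b
  proof -
    have "\<alpha> ^ b = \<alpha> ^ a * \<alpha> ^ (b - a)" using that by (simp flip: power_add)
    hence "\<alpha> ^ a = \<alpha> ^ b \<longleftrightarrow> \<alpha> ^ (b - a) = 1" using alpha_nz by auto
    also have "\<dots> \<longleftrightarrow> (q ^ n - 1) dvd (b - a)" by (rule alpha_one_iff)
    also have "\<dots> \<longleftrightarrow> a mod (q ^ n - 1) = b mod (q ^ n - 1)"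
      using that by (metis mod_eq_dvd_iff_nat)
    finally show ?thesis .
  qed
  show ?thesis using gen[of a b] gen[of b a] by (cases "a \<le> b") auto
qed

lemma alpha_inj: "inj_on (\<lambda>j. \<alpha> ^ j) {..<q ^ n - 1}"
proof (rule inj_onI)
  fix a b assume "a \<in> {..<q ^ n - 1}" "b \<in> {..<q ^ n - 1}" "\<alpha> ^ a = \<alpha> ^ b"
  hence "a mod (q ^ n - 1) = b mod (q ^ n - 1)" "a < q ^ n - 1" "b < q ^ n - 1"
    using alpha_eq_iff by auto
  thus "a = b" by simp
qed

end

lemma pow_suc_one: "x ^ k = 1 \<Longrightarrow> x ^ Suc k = (x::'a::field)" by simp
lemma pow_suc_one': "x \<noteq> 0 \<Longrightarrow> x ^ Suc k = x \<Longrightarrow> x ^ k = (1::'a::field)" by simp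

context ffset begin

lemma sub_setup:
  assumes "m dvd n" "1 \<le> m"
  shows "2 \<le> q ^ m" "(q ^ m - 1) * ((q ^ n - 1) div (q ^ m - 1)) = q ^ n - 1"
    "0 < (q ^ n - 1) div (q ^ m - 1)"
proof -
  have "q ^ 1 \<le> q ^ m" using q2 assms(2) by (intro power_increasing) auto
  thus Q2: "2 \<le> q ^ m" using q2 by simp
  obtain t where t: "n = m * t" using assms(1) by blast
  have "(q ^ m - 1) dvd ((q ^ m) ^ t - 1)" using Q2 by (intro dvd_pow_minus_one) auto
  hence dv: "(q ^ m - 1) dvd (q ^ n - 1)" using t by (simp add: power_mult)
  show pr: "(q ^ m - 1) * ((q ^ n - 1) div (q ^ m - 1)) = q ^ n - 1" using dv by simp
  have "q ^ n - 1 \<noteq> 0" using qn4 by simp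
  hence "(q ^ m - 1) * ((q ^ n - 1) div (q ^ m - 1)) \<noteq> 0" using pr by simp
  thus "0 < (q ^ n - 1) div (q ^ m - 1)" by simp
qed

lemma alpha_i_pow: "alpha_i q n \<alpha> m ^ t = \<alpha> ^ (((q ^ n - 1) div (q ^ m - 1)) * t)"
  by (simp add: alpha_i_def power_mult)

lemma alpha_i_inj:
  assumes "m dvd n" "1 \<le> m"
  shows "inj_on (\<lambda>t. alpha_i q n \<alpha> m ^ t) {..<q ^ m - 1}"
proof (rule inj_onI)
  define N where "N = (q ^ n - 1) div (q ^ m - 1)"
  note S = sub_setup[OF assms, folded N_def]
  fix a b assume ab: "a \<in> {..<q ^ m - 1}" "b \<in> {..<q ^ m - 1}"
    "alpha_i q n \<alpha> m ^ a = alpha_i q n \<alpha> m ^ b"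
  hence h: "\<alpha> ^ (N * a) = \<alpha> ^ (N * b)" by (simp add: alpha_i_pow N_def)
  have e: "N * (q ^ m - 1) = q ^ n - 1" using S(2) by (simp add: mult.commute)
  have "N * a < q ^ n - 1" "N * b < q ^ n - 1" unfolding e[symmetric] using ab(1,2) S(3) by simp_all
  hence "N * a = N * b" using h alpha_inj by (auto dest: inj_onD)
  thus "a = b" using S(3) by simp
qed

lemma alpha_i_in: assumes "m dvd n" "1 \<le> m" shows "alpha_i q n \<alpha> m ^ t \<in> subfield q m"
proof -
  define N where "N = (q ^ n - 1) div (q ^ m - 1)"
  note S = sub_setup[OF assms, folded N_def]
  have "(alpha_i q n \<alpha> m ^ t) ^ (q ^ m - 1) = \<alpha> ^ ((q ^ n - 1) * t)"
    using S(2) by (simp add: alpha_i_pow N_def power_mult[symmetric] mult_ac)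
  also have "\<dots> = 1" by (simp add: alpha_one_iff)
  finally have "(alpha_i q n \<alpha> m ^ t) ^ Suc (q ^ m - 1) = alpha_i q n \<alpha> m ^ t" by (rule pow_suc_one)
  moreover have "Suc (q ^ m - 1) = q ^ m" using S(1) by simp
  ultimately show ?thesis by (simp add: subfield_def del: power_Suc)
qed

lemma card_subfield:
  assumes "m dvd n" "1 \<le> m" shows "card (subfield q m :: 'a set) = q ^ m"
proof -
  define N where "N = (q ^ n - 1) div (q ^ m - 1)"
  define Q where "Q = q ^ m"
  note S = sub_setup[OF assms, folded N_def Q_def]
  have eq: "subfield q m - {0} = (\<lambda>t. alpha_i q n \<alpha> m ^ t) ` {..<Q - 1}"
  proof
    show "(\<lambda>t. alpha_i q n \<alpha> m ^ t) ` {..<Q - 1} \<subseteq> subfield q m - {0}"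
      using alpha_i_in[OF assms] alpha_nz by (auto simp: alpha_i_pow)
  next
    show "subfield q m - {0} \<subseteq> (\<lambda>t. alpha_i q n \<alpha> m ^ t) ` {..<Q - 1}"
    proof
      fix x :: 'a assume x: "x \<in> subfield q m - {0}"
      have sQ: "Suc (Q - 1) = Q" using S(1) by (simp add: Q_def)
      have xQ: "x ^ Q = x" "x \<noteq> 0" using x by (auto simp: subfield_def Q_def)
      have x1: "x ^ (Q - 1) = 1" using pow_suc_one'[OF xQ(2), of "Q - 1"] xQ(1) unfolding sQ by blast
      obtain j where j: "x = \<alpha> ^ j" using prim xQ(2) by blast
      have "\<alpha> ^ (j * (Q - 1)) = 1" using x1 j by (simp add: power_mult)
      hence "(Q - 1) * N dvd j * (Q - 1)" using alpha_one_iff S(2) by simp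
      hence "N dvd j" using S(1) by (simp add: mult.commute)
      then obtain l where l: "j = N * l" by blast
      have "(N * l) mod ((Q - 1) * N) = (N * (l mod (Q - 1))) mod ((Q - 1) * N)"
        by (simp add: mult.commute[of "Q - 1" N] mod_mult_mult1)
      hence "\<alpha> ^ (N * l) = \<alpha> ^ (N * (l mod (Q - 1)))" by (simp only: alpha_eq_iff S(2)[symmetric])
      hence "x = alpha_i q n \<alpha> m ^ (l mod (Q - 1))" using j l by (simp add: alpha_i_pow N_def Q_def)
      moreover have "l mod (Q - 1) < Q - 1" using S(1) by simp
      ultimately show "x \<in> (\<lambda>t. alpha_i q n \<alpha> m ^ t) ` {..<Q - 1}" by blast
    qed
  qed
  have "card (subfield q m - {0::'a}) = Q - 1"
    unfolding eq using alpha_i_inj[OF assms] by (simp add: card_image Q_def)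
  moreover have "(0::'a) \<in> subfield q m" using sf_subfield by (simp add: sf_def)
  ultimately show ?thesis using S(1) by (simp add: card_Diff_singleton Q_def)
qed

end

lemma indep:
  fixes a :: "'a::{finite,field}"
  assumes K: "sf K" and inj: "inj_on (\<lambda>t. a ^ t) {..<P}"
  shows "card K ^ j < P \<Longrightarrow> (\<forall>t<j. e t \<in> K) \<Longrightarrow> (\<Sum>t<j. e t * a ^ t) = 0 \<Longrightarrow> \<forall>t<j. e t = 0"
proof (induction j)
  case 0 thus ?case by simp
next
  case (Suc j)
  have K1: "1 \<le> card K" using sf_card[OF K] by simp
  have sumS: "(\<Sum>t<j. e t * a ^ t) + e j * a ^ j = 0" using Suc.prems(3) by simp
  show ?case
  proof (cases "e j = 0")
    case True
    hence "(\<Sum>t<j. e t * a ^ t) = 0" using sumS by simp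
    moreover have "card K ^ j < P"
    proof -
      have "card K ^ j \<le> card K ^ Suc j" using K1 by (intro power_increasing) auto
      thus ?thesis using Suc.prems(1) by linarith
    qed
    ultimately have "\<forall>t<j. e t = 0" using Suc.prems(2) by (intro Suc.IH) auto
    thus ?thesis using True by (simp add: less_Suc_eq)
  next
    case False
    define G where "G = (\<lambda>t. a ^ t) ` {..<j}"
    define S where "S = spn K G"
    have fG: "finite G" by (simp add: G_def)
    have Sssp: "ssp K S" unfolding S_def by (rule spn_ssp[OF K])
    have gen: "a ^ t \<in> S" if "t < j" for t
      unfolding S_def by (rule spn_gen[OF K fG]) (use that in \<open>auto simp: G_def\<close>)
    have s1: "(\<Sum>t<j. e t * a ^ t) \<in> S"
      apply (rule ssp_sum[OF Sssp]) using gen Suc.prems(2) Sssp by (auto simp: ssp_def)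
    have s2: "a ^ j = (- inverse (e j)) * (\<Sum>t<j. e t * a ^ t)"
      using sumS False by (simp add: field_simps eq_neg_iff_add_eq_0)
    have s3: "- inverse (e j) \<in> K" using K Suc.prems(2) False unfolding sf_def by auto
    have "(- inverse (e j)) * (\<Sum>t<j. e t * a ^ t) \<in> S" using s1 s3 Sssp unfolding ssp_def by blast
    hence aj: "a ^ j \<in> S" using s2 by simp
    have aS: "a * x \<in> S" if "x \<in> S" for x
    proof -
      have "\<forall>v\<in>G. a * v \<in> S"
      proof
        fix v assume "v \<in> G"
        then obtain t where t: "t < j" "v = a ^ t" by (auto simp: G_def)
        show "a * v \<in> S"
        proof (cases "Suc t < j")
          case True thus ?thesis using gen[of "Suc t"] t by simp
        next
          case False hence "Suc t = j" using t by simp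
          hence "a * v = a ^ j" using t by auto
          thus ?thesis using aj by simp
        qed
      qed
      moreover have "x \<in> spn K G" using that by (simp add: S_def)
      ultimately show ?thesis by (rule spn_mult[OF Sssp fG])
    qed
    have up: "a ^ (j + u) \<in> S" for u
    proof (induction u)
      case 0 thus ?case using aj by simp
    next
      case (Suc u) thus ?case using aS[of "a ^ (j + u)"] by simp
    qed
    have all: "a ^ N \<in> S" for N
    proof (cases "N < j")
      case True thus ?thesis by (rule gen)
    next
      case False thus ?thesis using up[of "N - j"] by simp
    qed
    have "P = card ((\<lambda>t. a ^ t) ` {..<P})" using card_image[OF inj] by simp
    also have "\<dots> \<le> card S" using all by (intro card_mono) auto
    also have "\<dots> \<le> card K ^ card G" unfolding S_def by (rule spn_card_le[OF fG])
    also have "\<dots> \<le> card K ^ j"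
      using K1 card_image_le[of "{..<j}" "\<lambda>t. a ^ t"] unfolding G_def by (intro power_increasing) auto
    also have "\<dots> \<le> card K ^ Suc j" using K1 by (intro power_increasing) auto
    finally show ?thesis using Suc.prems(1) by simp
  qed
qed

lemma weaveI: "\<forall>t<j. c t \<in> subfield q (m i) \<Longrightarrow> x = (\<Sum>t<j. c t * alpha_i q n \<alpha> (m (Suc i)) ^ t)
   \<Longrightarrow> x \<in> weave_sub q n \<alpha> m i j"
  unfolding weave_sub_def by blast

context ffset begin

lemma weave_ssp: "ssp (subfield q (m i)) (weave_sub q n \<alpha> m i j :: 'a set)"
proof -
  let ?K = "subfield q (m i) :: 'a set"
  let ?a = "alpha_i q n \<alpha> (m (Suc i))"
  have K: "sf ?K" by (rule sf_subfield)
  have "(0::'a) = (\<Sum>t<j. 0 * ?a ^ t) \<and> (\<forall>t<j. (0::'a) \<in> ?K)" using K by (simp add: sf_def)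
  hence z: "0 \<in> weave_sub q n \<alpha> m i j" by (intro weaveI[of j "\<lambda>_. 0"]) auto
  have ad: "x + y \<in> weave_sub q n \<alpha> m i j" if hx: "x \<in> weave_sub q n \<alpha> m i j" and hy: "y \<in> weave_sub q n \<alpha> m i j" for x y
  proof -
    obtain c where c: "x = (\<Sum>t<j. c t * ?a ^ t)" "\<forall>t<j. c t \<in> ?K" using hx unfolding weave_sub_def by blast
    obtain d where d: "y = (\<Sum>t<j. d t * ?a ^ t)" "\<forall>t<j. d t \<in> ?K" using hy unfolding weave_sub_def by blast
    have "x + y = (\<Sum>t<j. (c t + d t) * ?a ^ t)" by (simp add: c d sum.distrib distrib_right)
    moreover have "\<forall>t<j. c t + d t \<in> ?K" using c d K by (auto simp: sf_def)
    ultimately show ?thesis by (intro weaveI[of j "\<lambda>t. c t + d t"]) auto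
  qed
  have sc: "r * x \<in> weave_sub q n \<alpha> m i j" if hr: "r \<in> ?K" and hx: "x \<in> weave_sub q n \<alpha> m i j" for r x
  proof -
    obtain c where c: "x = (\<Sum>t<j. c t * ?a ^ t)" "\<forall>t<j. c t \<in> ?K" using hx unfolding weave_sub_def by blast
    have "r * x = (\<Sum>t<j. (r * c t) * ?a ^ t)" by (simp add: c sum_distrib_left mult.assoc)
    moreover have "\<forall>t<j. r * c t \<in> ?K" using c hr K by (auto simp: sf_def)
    ultimately show ?thesis by (intro weaveI[of j "\<lambda>t. r * c t"]) auto
  qed
  show ?thesis unfolding ssp_def using z ad sc by blast
qed

lemma weave_one: "weave_sub q n \<alpha> m i 1 = (subfield q (m i) :: 'a set)"
proof
  show "weave_sub q n \<alpha> m i 1 \<subseteq> subfield q (m i)" unfolding weave_sub_def by auto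
next
  show "subfield q (m i) \<subseteq> weave_sub q n \<alpha> m i 1"
  proof
    fix x :: 'a assume "x \<in> subfield q (m i)"
    hence "x = (\<Sum>t<1. (\<lambda>_. x) t * alpha_i q n \<alpha> (m (Suc i)) ^ t) \<and> (\<forall>t<1. (\<lambda>_. x) t \<in> subfield q (m i))"
      by simp
    thus "x \<in> weave_sub q n \<alpha> m i 1" by (intro weaveI[of 1 "\<lambda>_. x"]) auto
  qed
qed

lemma weave_mono: assumes "j \<le> j'" shows "weave_sub q n \<alpha> m i j \<subseteq> (weave_sub q n \<alpha> m i j' :: 'a set)"
proof
  let ?K = "subfield q (m i) :: 'a set"
  let ?a = "alpha_i q n \<alpha> (m (Suc i))"
  fix x assume "x \<in> weave_sub q n \<alpha> m i j"
  then obtain c where c: "x = (\<Sum>t<j. c t * ?a ^ t)" "\<forall>t<j. c t \<in> ?K" unfolding weave_sub_def by blast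
  define c' where "c' t = (if t < j then c t else 0)" for t
  have "(\<Sum>t<j'. c' t * ?a ^ t) = (\<Sum>t<j. c' t * ?a ^ t)"
    by (rule sum.mono_neutral_right) (use assms in \<open>auto simp: c'_def\<close>)
  also have "\<dots> = x" unfolding c by (rule sum.cong) (auto simp: c'_def)
  finally have "x = (\<Sum>t<j'. c' t * ?a ^ t)" by simp
  moreover have "\<forall>t<j'. c' t \<in> ?K" using c sf_subfield[of "m i"] by (auto simp: c'_def sf_def)
  ultimately show "x \<in> weave_sub q n \<alpha> m i j'" by (intro weaveI[of j' c']) auto
qed

lemma weave_in:
  assumes "m i dvd m (Suc i)" "m (Suc i) dvd n" "1 \<le> m (Suc i)"
  shows "weave_sub q n \<alpha> m i j \<subseteq> (subfield q (m (Suc i)) :: 'a set)"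
proof -
  have ss: "ssp (subfield q (m (Suc i))) (subfield q (m (Suc i)) :: 'a set)"
    using sf_subfield[of "m (Suc i)"] by (auto simp: sf_def ssp_def)
  show ?thesis
  proof
    fix x assume "x \<in> weave_sub q n \<alpha> m i j"
    then obtain c where c: "x = (\<Sum>t<j. c t * alpha_i q n \<alpha> (m (Suc i)) ^ t)" "\<forall>t<j. c t \<in> subfield q (m i)"
      unfolding weave_sub_def by blast
    have "c t * alpha_i q n \<alpha> (m (Suc i)) ^ t \<in> subfield q (m (Suc i))" if "t < j" for t
    proof -
      have "c t \<in> subfield q (m (Suc i))" using c(2) that subfield_mono[OF assms(1)] by blast
      thus ?thesis using alpha_i_in[OF assms(2,3)] sf_subfield[of "m (Suc i)"] unfolding sf_def by blast
    qed
    thus "x \<in> subfield q (m (Suc i))" unfolding c(1)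
      by (intro ssp_sum[OF ss]) auto
  qed
qed

lemma weave_card:
  assumes "m i dvd m (Suc i)" "m (Suc i) dvd n" "1 \<le> m i" "m i < m (Suc i)"
    and j: "j < m (Suc i) div m i"
  shows "card (weave_sub q n \<alpha> m i j :: 'a set) = q ^ (m i * j)"
proof -
  define M where "M = m (Suc i)"
  define K where "K = (subfield q (m i) :: 'a set)"
  define a where "a = alpha_i q n \<alpha> M"
  define \<phi> where "\<phi> c = (\<Sum>t<j. c t * a ^ t)" for c
  have dK: "m i dvd n" using assms(1,2) by (rule dvd_trans)
  have cK: "card K = q ^ m i" unfolding K_def by (rule card_subfield[OF dK assms(3)])
  have K: "sf K" unfolding K_def by (rule sf_subfield)
  have M1: "1 \<le> M" using assms(3,4) M_def by simp
  have inj: "inj_on (\<lambda>t. a ^ t) {..<q ^ M - 1}" unfolding a_def by (rule alpha_i_inj) (use assms M1 in \<open>auto simp: M_def\<close>)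
  have "(j + 1) * m i \<le> (M div m i) * m i" using j M_def by (intro mult_le_mono1) simp
  also have "\<dots> = M" using assms(1) M_def by simp
  finally have jm: "m i * j \<le> M - 1" using assms(3) by (simp add: algebra_simps)
  have "q ^ (m i * j) \<le> q ^ (M - 1)" using jm q2 by (intro power_increasing) auto
  moreover have "2 \<le> q ^ (M - 1)"
  proof -
    have "q ^ 1 \<le> q ^ (M - 1)" using assms(3,4) q2 M_def by (intro power_increasing) auto
    thus ?thesis using q2 by simp
  qed
  moreover have "q ^ M = q * q ^ (M - 1)"
  proof -
    have "M = Suc (M - 1)" using M1 by simp
    hence "q ^ M = q ^ Suc (M - 1)" by (rule arg_cong)
    thus ?thesis by simp
  qed
  moreover have "2 * q ^ (M - 1) \<le> q * q ^ (M - 1)" using q2 by (intro mult_le_mono1)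
  ultimately have "q ^ (m i * j) < q ^ M - 1" by linarith
  moreover have "card K ^ j = q ^ (m i * j)" using cK by (simp add: power_mult)
  ultimately have lt: "card K ^ j < q ^ M - 1" by simp
  have inj\<phi>: "inj_on \<phi> (PiE {..<j} (\<lambda>_. K))"
  proof (rule inj_onI)
    fix c d assume cd: "c \<in> PiE {..<j} (\<lambda>_. K)" "d \<in> PiE {..<j} (\<lambda>_. K)" "\<phi> c = \<phi> d"
    have "(\<Sum>t<j. (c t - d t) * a ^ t) = (\<Sum>t<j. c t * a ^ t - d t * a ^ t)"
      by (rule sum.cong) (simp_all only: left_diff_distrib)
    also have "\<dots> = \<phi> c - \<phi> d" unfolding \<phi>_def by (rule sum_subtractf)
    finally have "(\<Sum>t<j. (c t - d t) * a ^ t) = 0" using cd(3) by simp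
    moreover have "\<forall>t<j. c t - d t \<in> K"
    proof (intro allI impI)
      fix t assume "t < j"
      hence "c t \<in> K" "d t \<in> K" using PiE_mem[OF cd(1)] PiE_mem[OF cd(2)] by auto
      hence "c t \<in> K" "- d t \<in> K" using K unfolding sf_def by auto
      hence "c t + - d t \<in> K" using K unfolding sf_def by blast
      thus "c t - d t \<in> K" by simp
    qed
    ultimately have "\<forall>t<j. c t - d t = 0" using indep[OF K inj lt, of "\<lambda>t. c t - d t"] by blast
    thus "c = d" by (intro PiE_ext[OF cd(1) cd(2)]) auto
  qed
  have img: "weave_sub q n \<alpha> m i j = \<phi> ` (PiE {..<j} (\<lambda>_. K))"
  proof
    show "weave_sub q n \<alpha> m i j \<subseteq> \<phi> ` (PiE {..<j} (\<lambda>_. K))"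
    proof
      fix x assume "x \<in> weave_sub q n \<alpha> m i j"
      then obtain c where c: "x = (\<Sum>t<j. c t * a ^ t)" "\<forall>t<j. c t \<in> K"
        unfolding weave_sub_def a_def M_def K_def by blast
      have "x = \<phi> (restrict c {..<j})" unfolding c(1) \<phi>_def by (rule sum.cong) auto
      moreover have "restrict c {..<j} \<in> PiE {..<j} (\<lambda>_. K)" using c(2) by auto
      ultimately show "x \<in> \<phi> ` (PiE {..<j} (\<lambda>_. K))" by blast
    qed
  next
    show "\<phi> ` (PiE {..<j} (\<lambda>_. K)) \<subseteq> weave_sub q n \<alpha> m i j"
    proof
      fix x assume "x \<in> \<phi> ` (PiE {..<j} (\<lambda>_. K))"
      then obtain c where c: "c \<in> PiE {..<j} (\<lambda>_. K)" "x = \<phi> c" by blast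
      show "x \<in> weave_sub q n \<alpha> m i j"
        by (rule weaveI[of j c]) (use c in \<open>auto simp: \<phi>_def a_def M_def K_def PiE_iff\<close>)
    qed
  qed
  have "card (weave_sub q n \<alpha> m i j) = card (PiE {..<j} (\<lambda>_. K))"
    unfolding img by (rule card_image[OF inj\<phi>])
  also have "\<dots> = q ^ (m i * j)" by (simp add: card_PiE cK power_mult)
  finally show ?thesis .
qed

end

definition scl :: "'a::{finite,field} \<Rightarrow> 'a set \<Rightarrow> 'a set" where
  "scl c U = (\<lambda>x. x * c) ` U"

lemma scl_ssp: assumes "c \<noteq> 0" "ssp R U" shows "ssp R (scl c U)"
proof -
  have "0 \<in> scl c U" using assms(2) unfolding scl_def ssp_def by (auto intro: image_eqI[of 0 _ 0])
  moreover have "x + y \<in> scl c U" if hx: "x \<in> scl c U" and hy: "y \<in> scl c U" for x y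
  proof -
    obtain u v where "u \<in> U" "v \<in> U" "x = u * c" "y = v * c" using hx hy unfolding scl_def by blast
    moreover have "u + v \<in> U" using assms(2) \<open>u \<in> U\<close> \<open>v \<in> U\<close> unfolding ssp_def by blast
    ultimately show ?thesis unfolding scl_def by (intro image_eqI[of _ _ "u + v"]) (auto simp: distrib_right)
  qed
  moreover have "r * x \<in> scl c U" if hr: "r \<in> R" and hx: "x \<in> scl c U" for r x
  proof -
    obtain u where "u \<in> U" "x = u * c" using hx unfolding scl_def by blast
    moreover have "r * u \<in> U" using assms(2) \<open>u \<in> U\<close> hr unfolding ssp_def by blast
    ultimately show ?thesis unfolding scl_def by (intro image_eqI[of _ _ "r * u"]) (auto simp: mult.assoc)
  qed
  ultimately show ?thesis unfolding ssp_def by blast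
qed

lemma scl_inj: "c \<noteq> 0 \<Longrightarrow> inj (\<lambda>x::'a::{finite,field}. x * c)"
  by (rule injI) simp

lemma card_scl: "c \<noteq> 0 \<Longrightarrow> card (scl c U) = card U"
  unfolding scl_def by (rule card_image) (auto intro: inj_on_subset[OF scl_inj])

lemma scl_sum: "scl c (subspace_sum U V) = subspace_sum (scl c U) (scl c V)"
proof
  show "scl c (subspace_sum U V) \<subseteq> subspace_sum (scl c U) (scl c V)"
  proof
    fix x assume "x \<in> scl c (subspace_sum U V)"
    then obtain u v where uv: "u \<in> U" "v \<in> V" "x = (u + v) * c"
      unfolding scl_def subspace_sum_def by blast
    hence "x = u * c + v * c" "u * c \<in> scl c U" "v * c \<in> scl c V" by (auto simp: distrib_right scl_def)
    thus "x \<in> subspace_sum (scl c U) (scl c V)" unfolding subspace_sum_def by blast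
  qed
next
  show "subspace_sum (scl c U) (scl c V) \<subseteq> scl c (subspace_sum U V)"
  proof
    fix x assume "x \<in> subspace_sum (scl c U) (scl c V)"
    then obtain u v where uv: "u \<in> U" "v \<in> V" "x = u * c + v * c"
      unfolding scl_def subspace_sum_def by blast
    hence "x = (u + v) * c" by (simp add: distrib_right)
    moreover have "u + v \<in> subspace_sum U V" using uv unfolding subspace_sum_def by blast
    ultimately show "x \<in> scl c (subspace_sum U V)" unfolding scl_def by blast
  qed
qed

lemma scl_int: "c \<noteq> 0 \<Longrightarrow> scl c (U \<inter> V) = scl c U \<inter> scl c V"
  unfolding scl_def by (rule image_Int[OF scl_inj])

lemma scl_scl: "scl c (scl d U) = scl (d * c) U"
  unfolding scl_def by (auto simp: image_image mult.assoc)

lemma scl_one: "scl 1 U = U" unfolding scl_def by simp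

lemma scl_sub: "U \<subseteq> V \<Longrightarrow> scl c U \<subseteq> scl c V" unfolding scl_def by auto

lemma scl_psub: "c \<noteq> 0 \<Longrightarrow> U \<subset> V \<Longrightarrow> scl c U \<subset> scl c V"
  unfolding scl_def psubset_eq using inj_image_subset_iff[OF scl_inj[of c]] by blast

lemma ssp_ssum: assumes "ssp R U" "ssp R V" shows "ssp R (subspace_sum U V)"
proof -
  have "0 \<in> subspace_sum U V" using assms unfolding ssp_def subspace_sum_def by force
  moreover have "x + y \<in> subspace_sum U V" if hx: "x \<in> subspace_sum U V" and hy: "y \<in> subspace_sum U V" for x y
  proof -
    obtain u v where uv: "u \<in> U" "v \<in> V" "x = u + v" using hx unfolding subspace_sum_def by blast
    obtain u' v' where uv': "u' \<in> U" "v' \<in> V" "y = u' + v'" using hy unfolding subspace_sum_def by blast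
    have "x + y = (u + u') + (v + v')" using uv uv' by (simp add: algebra_simps)
    moreover have "u + u' \<in> U" "v + v' \<in> V" using assms uv uv' unfolding ssp_def by blast+
    ultimately show ?thesis unfolding subspace_sum_def by blast
  qed
  moreover have "r * x \<in> subspace_sum U V" if hr: "r \<in> R" and hx: "x \<in> subspace_sum U V" for r x
  proof -
    obtain u v where uv: "u \<in> U" "v \<in> V" "x = u + v" using hx unfolding subspace_sum_def by blast
    have "r * x = r * u + r * v" using uv by (simp add: algebra_simps)
    moreover have "r * u \<in> U" "r * v \<in> V" using assms uv hr unfolding ssp_def by blast+
    ultimately show ?thesis unfolding subspace_sum_def by blast
  qed
  ultimately show ?thesis unfolding ssp_def by blast
qed

lemma ssp_int: "ssp R U \<Longrightarrow> ssp R V \<Longrightarrow> ssp R (U \<inter> V)"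
  unfolding ssp_def by blast

lemma sub_ssum1: "ssp R V \<Longrightarrow> U \<subseteq> subspace_sum U V"
  unfolding ssp_def subspace_sum_def by force

lemma sub_ssum2: "ssp R U \<Longrightarrow> V \<subseteq> subspace_sum U V"
  unfolding ssp_def subspace_sum_def by force

lemma card_direct:
  assumes R: "sf R" and U: "ssp R U" and V: "ssp R V" and I: "U \<inter> V = {0}"
  shows "card (subspace_sum U V) = card U * card V"
proof -
  have eq: "subspace_sum U V = (\<lambda>(u, v). u + v) ` (U \<times> V)" unfolding subspace_sum_def by auto
  have inj: "inj_on (\<lambda>(u, v). u + v) (U \<times> V)"
  proof (rule inj_onI, clarsimp)
    fix u v u' v' assume h: "u \<in> U" "v \<in> V" "u' \<in> U" "v' \<in> V" "u + v = u' + v'"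
    have "u - u' = v' - v" using h(5) by (simp add: algebra_simps)
    moreover have "u - u' \<in> U" "v' - v \<in> V" using ssp_diff[OF R U] ssp_diff[OF R V] h by blast+
    ultimately have "v' - v \<in> U \<inter> V" by simp
    hence "v' - v = 0" using I by blast
    moreover from this have "u - u' = 0" using \<open>u - u' = v' - v\<close> by simp
    ultimately show "u = u' \<and> v = v'" by simp
  qed
  show ?thesis unfolding eq card_image[OF inj] by (simp add: card_cartesian_product)
qed

lemma Fq_span_spn:
  assumes "sf (subfield q 1 :: 'a::{finite,field} set)" "finite S"
  shows "Fq_span q S = spn (subfield q 1) (S :: 'a set)"
proof
  show "spn (subfield q 1) S \<subseteq> Fq_span q S"
    unfolding spn_def Fq_span_def using assms(2) by blast
next
  show "Fq_span q S \<subseteq> spn (subfield q 1) S"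
  proof
    fix x assume "x \<in> Fq_span q S"
    then obtain T c where T: "T \<subseteq> S" "finite T" "\<forall>v\<in>T. c v \<in> subfield q 1" "x = (\<Sum>v\<in>T. c v * v)"
      unfolding Fq_span_def by blast
    define c' where "c' v = (if v \<in> T then c v else 0)" for v
    have "(\<Sum>v\<in>S. c' v * v) = (\<Sum>v\<in>T. c' v * v)"
      by (rule sum.mono_neutral_right) (use T assms(2) in \<open>auto simp: c'_def\<close>)
    also have "\<dots> = x" unfolding T(4) by (rule sum.cong) (auto simp: c'_def)
    finally have "x = (\<Sum>v\<in>S. c' v * v)" by simp
    moreover have "\<forall>v\<in>S. c' v \<in> subfield q 1" using T(3) assms(1) by (auto simp: c'_def sf_def)
    ultimately show "x \<in> spn (subfield q 1) S" by (rule spnI[rotated])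
  qed
qed

context ffset begin

lemma card_F1: "card (subfield q 1 :: 'a set) = q"
  using card_subfield[of 1] by simp

lemma Fq_dim_eq:
  assumes V: "ssp (subfield q 1) (V :: 'a set)" and c: "card V = q ^ d"
  shows "Fq_dim q V = d"
proof -
  have R: "sf (subfield q 1 :: 'a set)" by (rule sf_subfield)
  obtain S where S: "S \<subseteq> V" "finite S" "spn (subfield q 1) S = V" "card V = card (subfield q 1 :: 'a set) ^ card S"
    using basis_exists[OF R V] by blast
  have "q ^ card S = q ^ d" using S(4) c card_F1 by simp
  hence cS: "card S = d" using q2 by (simp add: power_inject_exp)
  show ?thesis unfolding Fq_dim_def
  proof (rule Least_equality)
    show "\<exists>S. S \<subseteq> V \<and> finite S \<and> card S = d \<and> Fq_span q S = V"
      using S cS Fq_span_spn[OF R S(2)] by auto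
  next
    fix d' assume "\<exists>S. S \<subseteq> V \<and> finite S \<and> card S = d' \<and> Fq_span q S = V"
    then obtain S' where S': "S' \<subseteq> V" "finite S'" "card S' = d'" "Fq_span q S' = V" by blast
    have "q ^ d = card V" using c by simp
    also have "\<dots> \<le> card (subfield q 1 :: 'a set) ^ card S'"
      using spn_card_le[OF S'(2), of "subfield q 1"] S'(4) Fq_span_spn[OF R S'(2)] by simp
    finally have "q ^ d \<le> q ^ d'" using card_F1 S'(3) by simp
    thus "d \<le> d'" using q2 by (simp add: power_le_imp_le_exp)
  qed
qed

end

locale wset = ffset q n \<alpha> for q n :: nat and \<alpha> :: "'a::{finite,field}" +
  fixes k :: nat and m :: "nat \<Rightarrow> nat" and \<beta> :: "'a::{finite,field}"
  assumes k_pos: "1 \<le> k"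
    and m_mono: "\<forall>i. 1 \<le> i \<and> i \<le> k \<longrightarrow> m i < m (Suc i)"
    and m_dvd: "\<forall>i. 1 \<le> i \<and> i \<le> k \<longrightarrow> m i dvd m (Suc i)"
    and m_last: "m (Suc k) = n"
    and beta_nz: "\<beta> \<noteq> 0"
    and beta_not: "\<beta> \<notin> subfield q (m 1)"
    and beta_cap: "{\<beta> ^ j | j::nat. True} \<inter> (subfield q (m 1) - {0})
                 = {\<beta> ^ j | j::nat. True} \<inter> (subfield q (m k) - {0})"
    and L_le3: "n div m k \<le> 3"
begin

lemma m1: "1 \<le> m 1"
proof (rule ccontr)
  assume "\<not> 1 \<le> m 1"
  hence "m 1 = 0" by simp
  hence "subfield q (m 1) = (UNIV :: 'a set)" by (simp add: subfield_def)
  thus False using beta_not by simp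
qed

lemma chain_aux: "1 \<le> i \<Longrightarrow> i + d \<le> Suc k \<Longrightarrow> m i dvd m (i + d) \<and> m i \<le> m (i + d)"
proof (induction d)
  case 0 thus ?case by simp
next
  case (Suc d)
  have h: "m (i + d) < m (Suc (i + d))" "m (i + d) dvd m (Suc (i + d))"
    using m_mono m_dvd Suc.prems by auto
  have "m i dvd m (i + d) \<and> m i \<le> m (i + d)" using Suc by simp
  thus ?case using h by (auto intro: dvd_trans)
qed

lemma chain: "1 \<le> i \<Longrightarrow> i \<le> i' \<Longrightarrow> i' \<le> Suc k \<Longrightarrow> m i dvd m i' \<and> m i \<le> m i'"
  using chain_aux[of i "i' - i"] by simp

lemma chain_strict: "1 \<le> i \<Longrightarrow> i < i' \<Longrightarrow> i' \<le> Suc k \<Longrightarrow> m i < m i'"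
proof -
  assume a: "1 \<le> i" "i < i'" "i' \<le> Suc k"
  have "m i < m (Suc i)" using m_mono a by auto
  moreover have "m (Suc i) \<le> m i'" using chain[of "Suc i" i'] a by auto
  ultimately show ?thesis by simp
qed

lemma mpos: "1 \<le> i \<Longrightarrow> i \<le> Suc k \<Longrightarrow> 1 \<le> m i"
  using chain[of 1 i] m1 by auto

lemma mdn: "1 \<le> i \<Longrightarrow> i \<le> Suc k \<Longrightarrow> m i dvd n"
  using chain[of i "Suc k"] m_last by auto

lemma Lge2: assumes "1 \<le> i" "i \<le> k" shows "2 \<le> m (Suc i) div m i"
proof -
  obtain L where L: "m (Suc i) = m i * L" using m_dvd assms by blast
  have "m i < m i * L" using m_mono assms L by auto
  hence "1 < L" by (metis mult.right_neutral nat_mult_less_cancel_disj not_less_eq le_refl less_one Suc_lessI nat_less_le)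
  thus ?thesis using L mpos[of i] assms by simp
qed

lemma mk_half: "2 * m k \<le> n"
proof -
  have "2 \<le> m (Suc k) div m k" using Lge2[of k] k_pos by simp
  hence "2 * m k \<le> (m (Suc k) div m k) * m k" by (intro mult_le_mono1)
  also have "\<dots> = m (Suc k)" using m_dvd k_pos by auto
  finally show ?thesis using m_last by simp
qed


lemma cKK: "card (subfield q (m k) :: 'a set) = q ^ m k"
proof -
  have "m k dvd n" "1 \<le> m k" using mdn[of k] mpos[of k] k_pos by auto
  thus ?thesis by (rule card_subfield)
qed

lemma W_card: "1 \<le> i \<Longrightarrow> i \<le> k \<Longrightarrow> j < m (Suc i) div m i \<Longrightarrow> card (weave_sub q n \<alpha> m i j) = q ^ (m i * j)"
  by (rule weave_card) (use m_dvd m_mono mdn[of "Suc i"] mpos[of i] in auto)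

lemma W_F1: "1 \<le> i \<Longrightarrow> i \<le> k \<Longrightarrow> ssp (subfield q 1) (weave_sub q n \<alpha> m i j)"
  using ssp_mono[OF weave_ssp[of m i j] subfield_mono[OF one_dvd, of "m i"]] by simp

lemma W_in_KK: assumes "1 \<le> i" "i \<le> k" "i < k \<or> j = 1" shows "weave_sub q n \<alpha> m i j \<subseteq> (subfield q (m k) :: 'a set)"
proof (cases "i < k")
  case True
  have "weave_sub q n \<alpha> m i j \<subseteq> subfield q (m (Suc i))"
    by (rule weave_in) (use m_dvd mdn[of "Suc i"] mpos[of "Suc i"] assms in auto)
  also have "\<dots> \<subseteq> (subfield q (m k) :: 'a set)" using chain[of "Suc i" k] True assms by (intro subfield_mono) auto
  finally show ?thesis .
next
  case False
  hence "i = k" "j = 1" using assms by auto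
  thus ?thesis using weave_one by simp
qed

lemma one_in_W: assumes "1 \<le> j" shows "1 \<in> weave_sub q n \<alpha> m i j"
proof -
  have "1 \<in> weave_sub q n \<alpha> m i 1" using weave_one sf_subfield[of "m i"] by (simp add: sf_def)
  thus ?thesis using weave_mono[OF assms] by blast
qed

lemma not_stable:
  assumes g: "\<gamma> \<noteq> 0" "\<gamma> \<notin> (subfield q (m k) :: 'a set)" and L3: "n = 3 * m k" and eq: "scl \<gamma> (weave_sub q n \<alpha> m k 2) = weave_sub q n \<alpha> m k 2"
  shows False
proof -
  define V where "V = weave_sub q n \<alpha> m k 2"
  define Q where "Q = q ^ m k"
  have sfK: "sf (subfield q (m k) :: 'a set)" by (rule sf_subfield)
  have VK: "ssp (subfield q (m k) :: 'a set) V" unfolding V_def by (rule weave_ssp)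
  have cV: "card V = Q ^ 2" unfolding V_def Q_def
    using W_card[of k 2] k_pos L3 m_last mpos[of k] by (simp add: power_mult)
  have Q2: "2 \<le> Q" unfolding Q_def using sub_setup(1)[OF mdn mpos] k_pos by simp
  have cU: "card (UNIV :: 'a set) = Q ^ 3" using card L3 by (simp add: Q_def power_mult mult.commute)
  define T where "T = {z. \<forall>w\<in>V. z * w \<in> V}"
  have one: "1 \<in> V" unfolding V_def by (rule one_in_W) simp
  have T0: "0 \<in> T" "1 \<in> T" using VK unfolding T_def ssp_def by auto
  have Tadd: "z1 + z2 \<in> T" if "z1 \<in> T" "z2 \<in> T" for z1 z2
    using that VK unfolding T_def ssp_def by (auto simp: distrib_right)
  have Tmul: "z1 * z2 \<in> T" if "z1 \<in> T" "z2 \<in> T" for z1 z2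
    using that unfolding T_def by (auto simp: mult.assoc)
  have m1K: "- 1 \<in> (subfield q (m k) :: 'a set)" using sfK unfolding sf_def by blast
  have Tneg: "- z \<in> T" if "z \<in> T" for z
  proof -
    have "\<forall>w\<in>V. (- 1) * (z * w) \<in> V" using that VK m1K unfolding T_def ssp_def by blast
    thus ?thesis unfolding T_def by simp
  qed
  have Tpow: "z ^ s \<in> T" if "z \<in> T" for z s
    by (induction s) (use T0 Tmul that in auto)
  have Tinv: "inverse z \<in> T" if "z \<in> T" "z \<noteq> 0" for z
  proof -
    have "Suc (q ^ n - 1 - 1) = q ^ n - 1" using qn4 by simp
    hence "z * z ^ (q ^ n - 1 - 1) = z ^ (q ^ n - 1)" by (metis power_Suc)
    also have "\<dots> = 1" by (rule pow_N0[OF that(2)])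
    finally have "inverse z = z ^ (q ^ n - 1 - 1)" using that(2) by (simp add: field_simps)
    thus ?thesis using Tpow[OF that(1)] by simp
  qed
  have sfT: "sf T" unfolding sf_def
  proof (intro conjI ballI impI)
    show "0 \<in> T" "1 \<in> T" using T0 by auto
  next
    fix x y assume "x \<in> T" "y \<in> T" thus "x + y \<in> T" "x * y \<in> T" using Tadd Tmul by auto
  next
    fix x assume "x \<in> T" thus "- x \<in> T" by (rule Tneg)
  next
    fix x assume "x \<in> T" "x \<noteq> 0" thus "inverse x \<in> T" by (rule Tinv)
  qed
  have KT: "(subfield q (m k) :: 'a set) \<subseteq> T" using VK unfolding T_def ssp_def by blast
  have gT: "\<gamma> \<in> T"
  proof -
    have "\<gamma> * w \<in> V" if "w \<in> V" for w
    proof -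
      have "w * \<gamma> \<in> scl \<gamma> V" using that unfolding scl_def by blast
      thus ?thesis using eq V_def by (simp add: mult.commute)
    qed
    thus ?thesis unfolding T_def by blast
  qed
  have TV: "T \<subseteq> V"
  proof
    fix z assume "z \<in> T"
    hence "z * 1 \<in> V" using one unfolding T_def by blast
    thus "z \<in> V" by simp
  qed
  have TK: "ssp (subfield q (m k) :: 'a set) T" unfolding ssp_def
  proof (intro conjI ballI)
    show "0 \<in> T" by (rule T0)
  next
    fix x y assume "x \<in> T" "y \<in> T" thus "x + y \<in> T" by (rule Tadd)
  next
    fix c x assume "c \<in> (subfield q (m k) :: 'a set)" "x \<in> T"
    thus "c * x \<in> T" using VK unfolding T_def ssp_def by (auto simp: mult.assoc)
  qed
  obtain f where f: "card T = Q ^ f" using card_ssp[OF sfK TK] cKK Q_def by auto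
  have "Q ^ f \<le> Q ^ 2" using card_mono[OF _ TV] f cV by simp
  hence f2: "f \<le> 2" using Q2 by (simp add: power_le_imp_le_exp)
  have "f \<noteq> 0 \<and> f \<noteq> 1"
  proof (rule ccontr)
    assume "\<not> (f \<noteq> 0 \<and> f \<noteq> 1)"
    hence "card T \<le> Q" using f Q2 by auto
    moreover have "card (subfield q (m k) :: 'a set) \<le> card T" using card_mono[OF _ KT] by simp
    ultimately have "card (subfield q (m k) :: 'a set) = card T" using cKK Q_def by simp
    hence "(subfield q (m k) :: 'a set) = T" using KT by (intro card_subset_eq) auto
    thus False using gT g(2) by simp
  qed
  hence "f = 2" using f2 by simp
  hence "card T = card V" using f cV by simp
  hence TVe: "T = V" using TV by (intro card_subset_eq) auto
  have "ssp T (UNIV :: 'a set)" unfolding ssp_def by simp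
  then obtain e where "card (UNIV :: 'a set) = card T ^ e" using card_ssp[OF sfT] by blast
  hence "Q ^ 3 = Q ^ (2 * e)" using cU TVe cV by (simp add: power_mult)
  hence "3 = 2 * e" using Q2 by (simp add: power_inject_exp)
  thus False by presburger
qed

end

context wset begin

lemma t_lt: assumes "1 \<le> i" "i \<le> k" "j < m (Suc i) div m i" shows "j * m i < m (Suc i)"
proof -
  have "(j + 1) * m i \<le> (m (Suc i) div m i) * m i" using assms(3) by (intro mult_le_mono1) simp
  also have "\<dots> = m (Suc i)" using m_dvd assms by auto
  finally show ?thesis using mpos[of i] assms by simp
qed

lemma pos_dist:
  assumes ij: "1 \<le> i" "i \<le> k" "1 \<le> j" "j < m (Suc i) div m i"
    and xy: "x \<noteq> 0" "y \<noteq> 0" "y / x \<notin> (subfield q (m k) :: 'a set)"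
  shows "subspace_dist q (scl x (weave_sub q n \<alpha> m i j)) (scl y (weave_sub q n \<alpha> m i j))
       = (if j * m i \<le> n div 2 then 2 * (j * m i) else 2 * (n - j * m i))"
proof -
  define V where "V = weave_sub q n \<alpha> m i j"
  define \<gamma> where "\<gamma> = y / x"
  define F1 where "F1 = (subfield q 1 :: 'a set)"
  have g0: "\<gamma> \<noteq> 0" using xy by (simp add: \<gamma>_def)
  have hy: "y = \<gamma> * x" using xy by (simp add: \<gamma>_def)
  define Vg where "Vg = scl \<gamma> V"
  have e1: "scl y V = scl x Vg" by (simp add: Vg_def scl_scl hy)
  have sumeq: "subspace_sum (scl x V) (scl y V) = scl x (subspace_sum V Vg)" using e1 scl_sum[of x V Vg] by simp
  have inteq: "scl x V \<inter> scl y V = scl x (V \<inter> Vg)" using e1 scl_int[OF xy(1)] by simp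
  have sf1: "sf F1" unfolding F1_def by (rule sf_subfield)
  have F1V: "ssp F1 V" unfolding V_def F1_def by (rule W_F1[OF ij(1,2)])
  have F1Vg: "ssp F1 Vg" unfolding Vg_def by (rule scl_ssp[OF g0 F1V])
  have F1A: "ssp F1 (subspace_sum V Vg)" by (rule ssp_ssum[OF F1V F1Vg])
  have F1B: "ssp F1 (V \<inter> Vg)" by (rule ssp_int[OF F1V F1Vg])
  have dimA: "Fq_dim q (scl x (subspace_sum V Vg)) = d" if "card (subspace_sum V Vg) = q ^ d" for d
    by (rule Fq_dim_eq) (use scl_ssp[OF xy(1) F1A] card_scl[OF xy(1)] that in \<open>auto simp: F1_def\<close>)
  have dimB: "Fq_dim q (scl x (V \<inter> Vg)) = d" if "card (V \<inter> Vg) = q ^ d" for d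
    by (rule Fq_dim_eq) (use scl_ssp[OF xy(1) F1B] card_scl[OF xy(1)] that in \<open>auto simp: F1_def\<close>)
  have dist: "subspace_dist q (scl x V) (scl y V) = Fq_dim q (scl x (subspace_sum V Vg)) - Fq_dim q (scl x (V \<inter> Vg))"
    unfolding subspace_dist_def sumeq inteq ..
  have cV: "card V = q ^ (m i * j)" unfolding V_def by (rule W_card[OF ij(1,2,4)])
  have cVg: "card Vg = q ^ (m i * j)" unfolding Vg_def using card_scl[OF g0] cV by simp
  show ?thesis
  proof (cases "i < k \<or> j = 1")
    case True
    have VK: "V \<subseteq> subfield q (m k)" unfolding V_def by (rule W_in_KK[OF ij(1,2) True])
    have sfK: "sf (subfield q (m k) :: 'a set)" by (rule sf_subfield)
    have B0: "V \<inter> Vg = {0}"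
    proof
      show "V \<inter> Vg \<subseteq> {0}"
      proof
        fix z assume z: "z \<in> V \<inter> Vg"
        then obtain w where w: "w \<in> V" "z = w * \<gamma>" unfolding Vg_def scl_def by blast
        show "z \<in> {0}"
        proof (cases "w = 0")
          case True thus ?thesis using w by simp
        next
          case False
          have "z \<in> subfield q (m k)" "w \<in> subfield q (m k)" using z w VK by auto
          hence "z * inverse w \<in> subfield q (m k)" using sfK False unfolding sf_def by blast
          moreover have "z * inverse w = \<gamma>" using w False by simp
          ultimately show ?thesis using xy(3) \<gamma>_def by simp
        qed
      qed
    next
      show "{0} \<subseteq> V \<inter> Vg" using F1V F1Vg unfolding ssp_def by auto
    qed
    have "card (subspace_sum V Vg) = q ^ (m i * j) * q ^ (m i * j)"
      using card_direct[OF sf1 F1V F1Vg B0] cV cVg by simp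
    also have "\<dots> = q ^ (m i * j + m i * j)" by (rule power_add[symmetric])
    also have "m i * j + m i * j = 2 * (j * m i)" by simp
    finally have "card (subspace_sum V Vg) = q ^ (2 * (j * m i))" .
    hence dA: "Fq_dim q (scl x (subspace_sum V Vg)) = 2 * (j * m i)" by (rule dimA)
    have "card (V \<inter> Vg) = q ^ 0" using B0 by simp
    hence dB: "Fq_dim q (scl x (V \<inter> Vg)) = 0" by (rule dimB)
    have "j * m i \<le> m k"
    proof (cases "i < k")
      case True
      have "j * m i < m (Suc i)" by (rule t_lt[OF ij(1,2,4)])
      moreover have "m (Suc i) \<le> m k" using chain[of "Suc i" k] True ij by auto
      ultimately show ?thesis by simp
    next
      case False thus ?thesis using \<open>i < k \<or> j = 1\<close> ij by auto
    qed
    hence "j * m i \<le> n div 2" using mk_half by simp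
    thus ?thesis using dist dA dB V_def by simp
  next
    case False
    hence ik: "i = k" and j2: "2 \<le> j" using ij by auto
    have Ln: "m (Suc k) div m k = n div m k" using m_last by simp
    have j2': "j = 2" and L3: "n div m k = 3" using ij(4) ik L_le3 j2 Ln by auto
    have n3: "n = 3 * m k"
    proof -
      have "m k dvd n" using mdn[of k] k_pos by simp
      thus ?thesis using L3 by (metis dvd_mult_div_cancel mult.commute)
    qed
    define Q where "Q = q ^ m k"
    define K where "K = (subfield q (m k) :: 'a set)"
    have sfK: "sf K" unfolding K_def by (rule sf_subfield)
    have cK: "card K = Q" unfolding K_def Q_def by (rule cKK)
    have Q2: "2 \<le> Q" unfolding Q_def using sub_setup(1)[OF mdn mpos] k_pos by simp
    have KV: "ssp K V" unfolding K_def V_def using weave_ssp[of m k j] ik by simp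
    have KVg: "ssp K Vg" unfolding Vg_def by (rule scl_ssp[OF g0 KV])
    have KA: "ssp K (subspace_sum V Vg)" by (rule ssp_ssum[OF KV KVg])
    have KB: "ssp K (V \<inter> Vg)" by (rule ssp_int[OF KV KVg])
    have cV2: "card V = Q ^ 2" using cV ik j2' by (simp add: Q_def power_mult)
    have cVg2: "card Vg = Q ^ 2" using cVg ik j2' by (simp add: Q_def power_mult)
    have cU: "card (UNIV :: 'a set) = Q ^ 3" using card n3 by (simp add: Q_def power_mult mult.commute)
    have neq: "Vg \<noteq> V"
    proof
      assume "Vg = V"
      thus False using not_stable[OF g0 _ n3] xy(3) ik j2' unfolding Vg_def V_def \<gamma>_def by auto
    qed
    obtain e1 where e1: "card (V \<inter> Vg) = Q ^ e1" using card_ssp[OF sfK KB] cK by auto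
    obtain e2 where e2: "card (subspace_sum V Vg) = Q ^ e2" using card_ssp[OF sfK KA] cK by auto
    have VA: "V \<subseteq> subspace_sum V Vg" by (rule sub_ssum1[OF KVg])
    have VgA: "Vg \<subseteq> subspace_sum V Vg" by (rule sub_ssum2[OF KV])
    have "Q ^ e1 \<le> Q ^ 2" using card_mono[of V "V \<inter> Vg"] e1 cV2 by auto
    hence e1le: "e1 \<le> 2" using Q2 by (simp add: power_le_imp_le_exp)
    have e1n2: "e1 \<noteq> 2"
    proof
      assume "e1 = 2"
      hence "card (V \<inter> Vg) = card V" using e1 cV2 by simp
      hence "V \<inter> Vg = V" by (intro card_subset_eq) auto
      hence "V \<subseteq> Vg" by blast
      moreover have "card V = card Vg" using cV2 cVg2 by simp
      ultimately have "V = Vg" by (intro card_subset_eq) auto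
      thus False using neq by simp
    qed
    have e1n0: "e1 \<noteq> 0"
    proof
      assume "e1 = 0"
      hence "card (V \<inter> Vg) = 1" using e1 by simp
      moreover have "0 \<in> V \<inter> Vg" using KB unfolding ssp_def by simp
      ultimately have "V \<inter> Vg = {0}" by (metis card_1_singletonE singletonD)
      hence "card (subspace_sum V Vg) = Q ^ 4" using card_direct[OF sfK KV KVg] cV2 cVg2
        by (simp add: power_add[symmetric])
      moreover have "card (subspace_sum V Vg) \<le> Q ^ 3" using card_mono[of UNIV "subspace_sum V Vg"] cU by simp
      ultimately have "Q ^ 4 \<le> Q ^ 3" by simp
      thus False using Q2 by (simp add: power_le_imp_le_exp)
    qed
    have e1v: "e1 = 1" using e1le e1n2 e1n0 by simp
    have "Q ^ e2 \<le> Q ^ 3" using card_mono[of UNIV "subspace_sum V Vg"] e2 cU by simp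
    hence e2le: "e2 \<le> 3" using Q2 by (simp add: power_le_imp_le_exp)
    have "Q ^ 2 \<le> Q ^ e2" using card_mono[OF _ VA] e2 cV2 by simp
    hence e2ge: "2 \<le> e2" using Q2 by (simp add: power_le_imp_le_exp)
    have e2n2: "e2 \<noteq> 2"
    proof
      assume "e2 = 2"
      hence "card (subspace_sum V Vg) = card V" using e2 cV2 by simp
      hence "V = subspace_sum V Vg" using VA by (intro card_subset_eq) auto
      hence "Vg \<subseteq> V" using VgA by simp
      moreover have "card Vg = card V" using cV2 cVg2 by simp
      ultimately have "Vg = V" by (intro card_subset_eq) auto
      thus False using neq by simp
    qed
    have e2v: "e2 = 3" using e2le e2ge e2n2 by simp
    have "card (subspace_sum V Vg) = q ^ n" using e2 e2v n3 by (simp add: Q_def power_mult mult.commute)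
    hence dA: "Fq_dim q (scl x (subspace_sum V Vg)) = n" by (rule dimA)
    have "card (V \<inter> Vg) = q ^ m k" using e1 e1v by (simp add: Q_def)
    hence dB: "Fq_dim q (scl x (V \<inter> Vg)) = m k" by (rule dimB)
    have mk1: "1 \<le> m k" using mpos[of k] k_pos by simp
    have "\<not> (j * m i \<le> n div 2)" using ik j2' n3 mk1 by simp
    moreover have "n - m k = 2 * (n - j * m i)" using ik j2' n3 by simp
    ultimately show ?thesis using dist dA dB V_def by simp
  qed
qed

end

definition PP :: "nat \<Rightarrow> (nat \<Rightarrow> nat) \<Rightarrow> (nat \<times> nat) list" where
  "PP k m = concat (map (\<lambda>i. map (\<lambda>j. (i, j)) [1..<m (Suc i) div m i]) [1..<Suc k])"

definition lexl :: "nat \<times> nat \<Rightarrow> nat \<times> nat \<Rightarrow> bool" where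
  "lexl p1 p2 \<longleftrightarrow> fst p1 < fst p2 \<or> (fst p1 = fst p2 \<and> snd p1 < snd p2)"

lemma set_PP: "(i, j) \<in> set (PP k m) \<longleftrightarrow> 1 \<le> i \<and> i \<le> k \<and> 1 \<le> j \<and> j < m (Suc i) div m i"
  by (auto simp: PP_def)

lemma wf_PP: "weaved_flag q n \<alpha> m k = map (\<lambda>(i, j). weave_sub q n \<alpha> m i j) (PP k m)"
  by (simp add: weaved_flag_def PP_def map_concat comp_def)

lemma wt_PP: "weaved_type m k = map (\<lambda>(i, j). j * m i) (PP k m)"
  by (simp add: weaved_type_def PP_def map_concat comp_def)

lemma sorted_pairs:
  assumes "\<forall>i. sorted_wrt (<) (f i :: nat list)"
  shows "sorted_wrt (<) is \<Longrightarrow> sorted_wrt lexl (concat (map (\<lambda>i. map (\<lambda>j. (i, j)) (f i)) is))"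
proof (induction "is")
  case Nil thus ?case by simp
next
  case (Cons i "is")
  have a: "sorted_wrt lexl (map (\<lambda>j. (i, j)) (f i))"
    unfolding sorted_wrt_map using assms by (auto simp: lexl_def intro: sorted_wrt_mono_rel[of _ "(<)"])
  have b: "sorted_wrt lexl (concat (map (\<lambda>i. map (\<lambda>j. (i, j)) (f i)) is))" using Cons by simp
  have c: "\<forall>x\<in>set (map (\<lambda>j. (i, j)) (f i)). \<forall>y\<in>set (concat (map (\<lambda>i. map (\<lambda>j. (i, j)) (f i)) is)). lexl x y"
    using Cons.prems by (auto simp: lexl_def)
  show ?case using a b c by (simp add: sorted_wrt_append)
qed

lemma sorted_PP: "sorted_wrt lexl (PP k m)"
  unfolding PP_def by (rule sorted_pairs[OF _ sorted_wrt_upt]) (intro allI sorted_wrt_upt)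

lemma sum_target:
  fixes ts :: "nat list" and n :: nat
  shows "2 * ((\<Sum>t\<leftarrow>ts. if t \<le> n div 2 then t else 0) + (\<Sum>t\<leftarrow>ts. if t > n div 2 then n - t else 0))
   = (\<Sum>t\<leftarrow>ts. if t \<le> n div 2 then 2 * t else 2 * (n - t))"
  by (induction ts) auto

lemma Fq_subspace_ssp: "Fq_subspace q V = ssp (subfield q 1) V"
  by (simp add: Fq_subspace_def ssp_def)

context wset begin

lemma W_psub:
  assumes p1: "(i1, j1) \<in> set (PP k m)" and p2: "(i2, j2) \<in> set (PP k m)" and l: "lexl (i1, j1) (i2, j2)"
  shows "weave_sub q n \<alpha> m i1 j1 \<subset> weave_sub q n \<alpha> m i2 j2"
proof -
  have h1: "1 \<le> i1" "i1 \<le> k" "1 \<le> j1" "j1 < m (Suc i1) div m i1" using p1 by (auto simp: set_PP)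
  have h2: "1 \<le> i2" "i2 \<le> k" "1 \<le> j2" "j2 < m (Suc i2) div m i2" using p2 by (auto simp: set_PP)
  have c1: "card (weave_sub q n \<alpha> m i1 j1) = q ^ (m i1 * j1)" by (rule W_card[OF h1(1,2,4)])
  have c2: "card (weave_sub q n \<alpha> m i2 j2) = q ^ (m i2 * j2)" by (rule W_card[OF h2(1,2,4)])
  have sub: "weave_sub q n \<alpha> m i1 j1 \<subseteq> weave_sub q n \<alpha> m i2 j2 \<and> m i1 * j1 < m i2 * j2"
  proof (cases "i1 < i2")
    case True
    have "weave_sub q n \<alpha> m i1 j1 \<subseteq> subfield q (m (Suc i1))"
      by (rule weave_in) (use m_dvd mdn[of "Suc i1"] mpos[of "Suc i1"] h1 in auto)
    also have "\<dots> \<subseteq> subfield q (m i2)" using chain[of "Suc i1" i2] True h1 h2 by (intro subfield_mono) auto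
    also have "\<dots> = weave_sub q n \<alpha> m i2 1" by (rule weave_one[symmetric])
    also have "\<dots> \<subseteq> weave_sub q n \<alpha> m i2 j2" by (rule weave_mono[OF h2(3)])
    finally have s: "weave_sub q n \<alpha> m i1 j1 \<subseteq> weave_sub q n \<alpha> m i2 j2" .
    have "m i1 * j1 < m (Suc i1)" using t_lt[OF h1(1,2,4)] by (simp add: mult.commute)
    also have "\<dots> \<le> m i2" using chain[of "Suc i1" i2] True h1 h2 by auto
    also have "\<dots> \<le> m i2 * j2" using h2(3) by simp
    finally show ?thesis using s by simp
  next
    case False
    hence e: "i1 = i2" "j1 < j2" using l by (auto simp: lexl_def)
    have "weave_sub q n \<alpha> m i1 j1 \<subseteq> weave_sub q n \<alpha> m i2 j2" using e weave_mono[of j1 j2] by simp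
    moreover have "m i1 * j1 < m i2 * j2" using e mpos[of i1] h1 by simp
    ultimately show ?thesis by simp
  qed
  have "card (weave_sub q n \<alpha> m i1 j1) < card (weave_sub q n \<alpha> m i2 j2)"
    unfolding c1 c2 using sub q2 by (intro power_strict_increasing) auto
  thus ?thesis using sub by auto
qed

lemma orbit_eq:
  "flag_orbit \<beta> (weaved_flag q n \<alpha> m k) = {map (\<lambda>(i, j). scl (\<beta> ^ e) (weave_sub q n \<alpha> m i j)) (PP k m) | e. True}"
  unfolding flag_orbit_def wf_PP scl_def by (simp add: comp_def split_def)

lemma orbit_flag:
  assumes "c \<noteq> 0"
  shows "is_flag_of_type q (weaved_type m k) (map (\<lambda>(i, j). scl c (weave_sub q n \<alpha> m i j)) (PP k m))"
proof -
  define F where "F = map (\<lambda>(i, j). scl c (weave_sub q n \<alpha> m i j)) (PP k m)"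
  have len: "length F = length (weaved_type m k)" by (simp add: F_def wt_PP)
  have pos: "Fq_subspace q (F ! x) \<and> Fq_dim q (F ! x) = weaved_type m k ! x" if "x < length F" for x
  proof -
    obtain i j where p: "PP k m ! x = (i, j)" by (cases "PP k m ! x")
    have "(i, j) \<in> set (PP k m)" using that p by (metis F_def length_map nth_mem)
    hence h: "1 \<le> i" "i \<le> k" "1 \<le> j" "j < m (Suc i) div m i" by (auto simp: set_PP)
    have Fx: "F ! x = scl c (weave_sub q n \<alpha> m i j)" using that p by (simp add: F_def)
    have tx: "weaved_type m k ! x = j * m i" using that p by (simp add: F_def wt_PP)
    have ss: "ssp (subfield q 1) (scl c (weave_sub q n \<alpha> m i j))" by (rule scl_ssp[OF assms W_F1[OF h(1,2)]])
    have "card (scl c (weave_sub q n \<alpha> m i j)) = q ^ (j * m i)"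
      using card_scl[OF assms] W_card[OF h(1,2,4)] by (simp add: mult.commute)
    hence "Fq_dim q (scl c (weave_sub q n \<alpha> m i j)) = j * m i" by (rule Fq_dim_eq[OF ss])
    thus ?thesis using ss Fx tx by (simp add: Fq_subspace_ssp)
  qed
  have srt: "sorted_wrt (\<subset>) F"
    unfolding F_def sorted_wrt_map
  proof (rule sorted_wrt_mono_rel[OF _ sorted_PP])
    fix p1 p2 assume h: "p1 \<in> set (PP k m)" "p2 \<in> set (PP k m)" "lexl p1 p2"
    obtain i1 j1 i2 j2 where p: "p1 = (i1, j1)" "p2 = (i2, j2)" by (cases p1, cases p2)
    have "weave_sub q n \<alpha> m i1 j1 \<subset> weave_sub q n \<alpha> m i2 j2" using h p by (intro W_psub) auto
    hence "scl c (weave_sub q n \<alpha> m i1 j1) \<subset> scl c (weave_sub q n \<alpha> m i2 j2)" by (rule scl_psub[OF assms])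
    thus "(case p1 of (i, j) \<Rightarrow> scl c (weave_sub q n \<alpha> m i j)) \<subset> (case p2 of (i, j) \<Rightarrow> scl c (weave_sub q n \<alpha> m i j))"
      using p by simp
  qed
  have "\<forall>x. Suc x < length F \<longrightarrow> F ! x \<subset> F ! Suc x"
    using sorted_wrt_nth_less[OF srt] by auto
  thus ?thesis unfolding is_flag_of_type_def F_def[symmetric] using len pos by auto
qed

end

context wset begin

definition FF :: "nat \<Rightarrow> 'a set list" where
  "FF e = map (\<lambda>(i, j). scl (\<beta> ^ e) (weave_sub q n \<alpha> m i j)) (PP k m)"

definition fD :: "nat \<Rightarrow> nat" where
  "fD t = (if t \<le> n div 2 then 2 * t else 2 * (n - t))"

lemma beta_quot: "\<exists>s. \<beta> ^ b / \<beta> ^ a = \<beta> ^ s"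
proof -
  have "Suc (q ^ n - 1 - 1) = q ^ n - 1" using qn4 by simp
  hence "\<beta> * \<beta> ^ (q ^ n - 1 - 1) = \<beta> ^ (q ^ n - 1)" by (metis power_Suc)
  also have "\<dots> = 1" by (rule pow_N0[OF beta_nz])
  finally have "inverse \<beta> = \<beta> ^ (q ^ n - 1 - 1)" using beta_nz by (simp add: field_simps)
  have "\<beta> ^ b / \<beta> ^ a = \<beta> ^ b * (inverse \<beta>) ^ a"
    by (simp add: divide_inverse power_inverse)
  also have "\<dots> = \<beta> ^ b * (\<beta> ^ (q ^ n - 1 - 1)) ^ a" using \<open>inverse \<beta> = _\<close> by simp
  also have "\<dots> = \<beta> ^ (b + (q ^ n - 1 - 1) * a)" by (simp add: power_add power_mult)
  finally show ?thesis by blast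
qed

lemma scl_fix:
  assumes g: "\<gamma> \<in> subfield q (m 1)" "\<gamma> \<noteq> 0" and p: "(i, j) \<in> set (PP k m)"
  shows "scl \<gamma> (weave_sub q n \<alpha> m i j) = weave_sub q n \<alpha> m i j"
proof -
  have h: "1 \<le> i" "i \<le> k" using p by (auto simp: set_PP)
  have "m 1 dvd m i" using chain[of 1 i] h by auto
  hence gi: "\<gamma> \<in> subfield q (m i)" using subfield_mono g(1) by blast
  have "scl \<gamma> (weave_sub q n \<alpha> m i j) \<subseteq> weave_sub q n \<alpha> m i j"
  proof
    fix z assume "z \<in> scl \<gamma> (weave_sub q n \<alpha> m i j)"
    then obtain w where w: "w \<in> weave_sub q n \<alpha> m i j" "z = w * \<gamma>" unfolding scl_def by blast
    have "\<gamma> * w \<in> weave_sub q n \<alpha> m i j" using weave_ssp[of m i j] gi w(1) unfolding ssp_def by blast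
    thus "z \<in> weave_sub q n \<alpha> m i j" using w(2) by (simp add: mult.commute)
  qed
  moreover have "card (scl \<gamma> (weave_sub q n \<alpha> m i j)) = card (weave_sub q n \<alpha> m i j)"
    by (rule card_scl[OF g(2)])
  ultimately show ?thesis by (intro card_subset_eq) auto
qed

lemma FF_neq_quot:
  assumes "FF a \<noteq> FF b" shows "\<beta> ^ b / \<beta> ^ a \<notin> (subfield q (m k) :: 'a set)"
proof
  define \<gamma> where "\<gamma> = \<beta> ^ b / \<beta> ^ a"
  assume gk: "\<beta> ^ b / \<beta> ^ a \<in> (subfield q (m k) :: 'a set)"
  have g0: "\<gamma> \<noteq> 0" using beta_nz by (simp add: \<gamma>_def)
  obtain s where s: "\<gamma> = \<beta> ^ s" using beta_quot \<gamma>_def by blast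
  have "\<gamma> \<in> {\<beta> ^ j | j::nat. True} \<inter> (subfield q (m k) - {0})" using s g0 gk \<gamma>_def by auto
  hence "\<gamma> \<in> subfield q (m 1)" using beta_cap by blast
  hence fix1: "scl \<gamma> (weave_sub q n \<alpha> m i j) = weave_sub q n \<alpha> m i j" if "(i, j) \<in> set (PP k m)" for i j
    using scl_fix g0 that by blast
  have hb: "\<beta> ^ b = \<gamma> * \<beta> ^ a" using beta_nz by (simp add: \<gamma>_def)
  have "scl (\<beta> ^ b) (weave_sub q n \<alpha> m i j) = scl (\<beta> ^ a) (weave_sub q n \<alpha> m i j)"
    if "(i, j) \<in> set (PP k m)" for i j
  proof -
    have "scl (\<beta> ^ b) (weave_sub q n \<alpha> m i j) = scl (\<beta> ^ a) (scl \<gamma> (weave_sub q n \<alpha> m i j))"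
      by (simp add: scl_scl hb)
    thus ?thesis using fix1[OF that] by simp
  qed
  hence "FF a = FF b" unfolding FF_def by (intro map_cong) auto
  thus False using assms by simp
qed

lemma flag_dist_FF:
  assumes "FF a \<noteq> FF b"
  shows "flag_dist q (FF a) (FF b) = (\<Sum>t\<leftarrow>weaved_type m k. fD t)"
proof -
  have nq: "\<beta> ^ b / \<beta> ^ a \<notin> (subfield q (m k) :: 'a set)" by (rule FF_neq_quot[OF assms])
  have x0: "\<beta> ^ a \<noteq> 0" "\<beta> ^ b \<noteq> 0" using beta_nz by auto
  define tp where "tp = (\<lambda>(i::nat, j::nat). j * m i)"
  have g: "subspace_dist q (FF a ! x) (FF b ! x) = fD (tp (PP k m ! x))" if "x < length (PP k m)" for x
  proof -
    obtain i j where p: "PP k m ! x = (i, j)" by (cases "PP k m ! x")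
    have "(i, j) \<in> set (PP k m)" using that p by (metis nth_mem)
    hence h: "1 \<le> i" "i \<le> k" "1 \<le> j" "j < m (Suc i) div m i" by (auto simp: set_PP)
    have "FF a ! x = scl (\<beta> ^ a) (weave_sub q n \<alpha> m i j)" "FF b ! x = scl (\<beta> ^ b) (weave_sub q n \<alpha> m i j)"
      using that p by (simp_all add: FF_def)
    thus ?thesis using pos_dist[OF h x0 nq] p by (simp add: fD_def tp_def)
  qed
  have "flag_dist q (FF a) (FF b) = (\<Sum>x<length (PP k m). fD (tp (PP k m ! x)))"
    unfolding flag_dist_def using g by (simp add: FF_def)
  also have "\<dots> = (\<Sum>x<length (PP k m). map (fD \<circ> tp) (PP k m) ! x)" by simp
  also have "\<dots> = sum_list (map (fD \<circ> tp) (PP k m))"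
    by (simp add: sum_list_sum_nth atLeast0LessThan)
  also have "\<dots> = (\<Sum>t\<leftarrow>weaved_type m k. fD t)" by (simp add: wt_PP tp_def comp_def)
  finally show ?thesis .
qed

lemma main_wset:
  "optimum_distance_flag_code q n (weaved_type m k) (flag_orbit \<beta> (weaved_flag q n \<alpha> m k))"
proof -
  define C where "C = flag_orbit \<beta> (weaved_flag q n \<alpha> m k)"
  have C: "C = {FF e | e. True}" unfolding C_def orbit_eq FF_def by simp
  have flags: "\<forall>F\<in>C. is_flag_of_type q (weaved_type m k) F"
    unfolding C FF_def using orbit_flag beta_nz by auto
  define D where "D = (\<Sum>t\<leftarrow>weaved_type m k. fD t)"
  have "FF 0 \<noteq> FF 1"
  proof
    assume eq: "FF 0 = FF 1"
    have "(1, 1) \<in> set (PP k m)" using Lge2[of 1] k_pos by (auto simp: set_PP)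
    then obtain x where x: "x < length (PP k m)" "PP k m ! x = (1, 1)" by (metis in_set_conv_nth)
    have "FF 0 ! x = FF 1 ! x" using eq by simp
    hence "scl 1 (weave_sub q n \<alpha> m 1 1) = scl \<beta> (weave_sub q n \<alpha> m 1 1)" using x by (simp add: FF_def)
    hence e: "subfield q (m 1) = scl \<beta> (subfield q (m 1))" unfolding scl_one weave_one .
    have "1 * \<beta> \<in> scl \<beta> (subfield q (m 1))" using sf_subfield[of "m 1"] unfolding scl_def sf_def by blast
    hence "\<beta> \<in> subfield q (m 1)" using e by simp
    thus False using beta_not by simp
  qed
  have S: "{flag_dist q F G | F G. F \<in> C \<and> G \<in> C \<and> F \<noteq> G} = {D}"
  proof
    show "{flag_dist q F G | F G. F \<in> C \<and> G \<in> C \<and> F \<noteq> G} \<subseteq> {D}"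
      unfolding C D_def using flag_dist_FF by auto
  next
    have "flag_dist q (FF 0) (FF 1) = D" unfolding D_def by (rule flag_dist_FF) fact
    moreover have "FF 0 \<in> C" "FF 1 \<in> C" unfolding C by auto
    ultimately show "{D} \<subseteq> {flag_dist q F G | F G. F \<in> C \<and> G \<in> C \<and> F \<noteq> G}"
      using \<open>FF 0 \<noteq> FF 1\<close> by blast
  qed
  have "min_flag_dist q C = D" unfolding min_flag_dist_def S by simp
  also have "D = 2 * ((\<Sum>t\<leftarrow>weaved_type m k. if t \<le> n div 2 then t else 0)
          + (\<Sum>t\<leftarrow>weaved_type m k. if t > n div 2 then n - t else 0))"
    unfolding D_def fD_def by (rule sum_target[symmetric])
  finally show ?thesis unfolding optimum_distance_flag_code_def C_def[symmetric] using flags by simp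
qed

end


theorem mainTheorem13:
  fixes q n k :: nat and m :: "nat \<Rightarrow> nat" and \<alpha> \<beta> :: "'a::{finite,field}"
  assumes q_pp: "\<exists>p r. prime p \<and> 0 < r \<and> q = p ^ r"
    and card: "card (UNIV :: 'a set) = q ^ n"
    and k_pos: "1 \<le> k"
    and m_mono: "\<forall>i. 1 \<le> i \<and> i \<le> k \<longrightarrow> m i < m (Suc i)"
    and m_dvd: "\<forall>i. 1 \<le> i \<and> i \<le> k \<longrightarrow> m i dvd m (Suc i)"
    and m_last: "m (Suc k) = n"
    and prim: "\<forall>x::'a. x \<noteq> 0 \<longrightarrow> (\<exists>j::nat. x = \<alpha> ^ j)"
    and beta_nz: "\<beta> \<noteq> 0"
    and beta_not: "\<beta> \<notin> subfield q (m 1)"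
    and beta_cap: "{\<beta> ^ j | j::nat. True} \<inter> (subfield q (m 1) - {0})
                 = {\<beta> ^ j | j::nat. True} \<inter> (subfield q (m k) - {0})"
    and L_le3: "n div m k \<le> 3"
  shows "optimum_distance_flag_code q n (weaved_type m k) (flag_orbit \<beta> (weaved_flag q n \<alpha> m k))"
proof -
  have m1: "1 \<le> m 1"
  proof (rule ccontr)
    assume "\<not> 1 \<le> m 1"
    hence "m 1 = 0" by simp
    hence "subfield q (m 1) = (UNIV :: 'a set)" by (simp add: subfield_def)
    thus False using beta_not by simp
  qed
  have ch: "1 + d \<le> Suc k \<Longrightarrow> m 1 + d \<le> m (1 + d)" for d
  proof (induction d)
    case 0 thus ?case by simp
  next
    case (Suc d)
    have "m (1 + d) < m (Suc (1 + d))" using m_mono Suc.prems by auto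
    thus ?case using Suc by simp
  qed
  have "m 1 + k \<le> n" using ch[of k] m_last by simp
  hence n2: "2 \<le> n" using m1 k_pos by simp
  interpret wset q n \<alpha> k m \<beta>
    by unfold_locales (fact q_pp card prim n2 k_pos m_mono m_dvd m_last beta_nz beta_not beta_cap L_le3)+
  show ?thesis by (rule main_wset)
qed

end
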